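(* Let $A\in\mathfrak S'_n$ be a matrix with entries in $\mathbb{Z}[\sqrt2]$ whose diagonal entries all lie in $\mathbb{Z}$, and let $G$ be its associated weighted graph. Then every cycle of $G$ contains an even number of edges of weight $\pm\sqrt2$. Hence $A\in\mathfrak S_n$.
   Context: Let $\mathcal R$ be the compositum of all real quadratic integer rings. For a symmetric $\mathcal R$-matrix $A$, let $L_A$ be the smallest normal extension of $\mathbb{Q}$ containing all entries of $A$. $\mathfrak S'_n$ is the set of $n\times n$ indecomposable symmetric $\mathcal R$-matrices $A$ such that for every $\sigma\in\operatorname{Gal}(L_A/\mathbb{Q})$ all eigenvalues of $\sigma(A)$ ($\sigma$ applied entrywise) lie in $[-2,2]$; $\mathfrak S_n$ is the subset of those with characteristic polynomial in $\mathbb{Z}[x]$. A matrix is indecomposable if its underlying graph is connected. The associated weighted graph $G$ of a symmetric matrix $A=(a_{uv})$ has vertex set the indices, an edge $uv$ ($u\ne v$) of weight $a_{uv}$ whenever $a_{uv}\neq0$, and charge $a_{vv}$ at vertex $v$; a cycle of $G$ is a cycle in this underlying simple graph. *)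

theory Defs
  imports "Jordan_Normal_Form.Char_Poly" "HOL-Computational_Algebra.Polynomial"
begin

definition zsqrt2_mat :: "nat \<Rightarrow> (nat \<Rightarrow> nat \<Rightarrow> int) \<Rightarrow> (nat \<Rightarrow> nat \<Rightarrow> int) \<Rightarrow> real mat" where
  "zsqrt2_mat n p q = mat n n (\<lambda>(i,j). of_int (p i j) + sqrt 2 * of_int (q i j))"

definition zsqrt2_conj_mat :: "nat \<Rightarrow> (nat \<Rightarrow> nat \<Rightarrow> int) \<Rightarrow> (nat \<Rightarrow> nat \<Rightarrow> int) \<Rightarrow> real mat" where
  "zsqrt2_conj_mat n p q = mat n n (\<lambda>(i,j). of_int (p i j) - sqrt 2 * of_int (q i j))"

definition symmetric_mat :: "real mat \<Rightarrow> bool" where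
  "symmetric_mat A \<longleftrightarrow> A \<in> carrier_mat (dim_row A) (dim_row A) \<and>
     (\<forall>i < dim_row A. \<forall>j < dim_row A. A $$ (i,j) = A $$ (j,i))"

definition adj :: "real mat \<Rightarrow> nat \<Rightarrow> nat \<Rightarrow> bool" where
  "adj A u v \<longleftrightarrow> u < dim_row A \<and> v < dim_row A \<and> u \<noteq> v \<and> A $$ (u,v) \<noteq> 0"

definition indecomposable :: "real mat \<Rightarrow> bool" where
  "indecomposable A \<longleftrightarrow>
     (\<forall>u < dim_row A. \<forall>v < dim_row A. (u, v) \<in> {(x,y). adj A x y}\<^sup>*)"

definition eigs_in_interval :: "real mat \<Rightarrow> bool" where
  "eigs_in_interval A \<longleftrightarrow>
     (\<forall>\<mu>. eigenvalue (map_mat complex_of_real A) \<mu> \<longrightarrow> \<mu> \<in> \<real> \<and> -2 \<le> Re \<mu> \<and> Re \<mu> \<le> 2)"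

definition is_cycle :: "real mat \<Rightarrow> nat list \<Rightarrow> bool" where
  "is_cycle A c \<longleftrightarrow> length c \<ge> 3 \<and> distinct c \<and>
     (\<forall>t < length c. adj A (c ! t) (c ! ((t + 1) mod length c)))"

definition num_sqrt2_edges :: "real mat \<Rightarrow> nat list \<Rightarrow> nat" where
  "num_sqrt2_edges A c =
     card {t. t < length c \<and> \<bar>A $$ (c ! t, c ! ((t + 1) mod length c))\<bar> = sqrt 2}"

end

theory Submission
  imports Defs "Jordan_Normal_Form.Spectral_Radius"
begin

lemma two_sq_int_aux: "(p::int)^2 = 2 * q^2 \<Longrightarrow> q = 0"
proof (induction "nat \<bar>q\<bar>" arbitrary: p q rule: less_induct)
  case less
  show ?case
  proof (rule ccontr)
    assume q0: "q \<noteq> 0"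
    have "even (p^2)" using less.prems by simp
    then have "even p" by simp
    then obtain r where r: "p = 2 * r" by blast
    have "q^2 = 2 * r^2" using less.prems r by (simp add: power2_eq_square)
    then have "even (q^2)" by simp
    then have "even q" by simp
    then obtain s where s: "q = 2 * s" by blast
    have "r^2 = 2 * s^2" using \<open>q^2 = 2 * r^2\<close> s by (simp add: power2_eq_square)
    moreover have "nat \<bar>s\<bar> < nat \<bar>q\<bar>" using s q0 by auto
    ultimately have "s = 0" using less.hyps by blast
    with s q0 show False by simp
  qed
qed

lemma sqrt2_lin_indep:
  fixes p q :: int
  assumes "real_of_int p + sqrt 2 * real_of_int q = 0"
  shows "p = 0 \<and> q = 0"
proof -
  have "(sqrt 2 * q)^2 = (real_of_int p)^2" using assms by (simp add: eq_neg_iff_add_eq_0[symmetric] )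
  then have "real_of_int (p^2) = real_of_int (2 * q^2)" by (simp add: power_mult_distrib)
  then have "p^2 = 2*q^2" by linarith
  then have "q = 0" by (rule two_sq_int_aux)
  with assms show ?thesis by simp
qed

lemma sqrt2_eq:
  fixes p q p' q' :: int
  assumes "real_of_int p + sqrt 2 * real_of_int q = real_of_int p' + sqrt 2 * real_of_int q'"
  shows "p = p' \<and> q = q'"
  using sqrt2_lin_indep[of "p - p'" "q - q'"] assms by (simp add: algebra_simps)

lemma poly_exp_beat:
  fixes r C1 C2 :: real
  assumes r: "r > 1"
  shows "\<exists>j. C1 + C2 * real (2^j) ^ d < r ^ (2^j)"
proof -
  define L where "L = ln r"
  have L: "L > 0" using r by (simp add: L_def)
  have f: "filterlim (\<lambda>m::nat. real m * L) at_top sequentially"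
    by (rule filterlim_at_top_mult_tendsto_pos[OF tendsto_const L filterlim_real_sequentially])
  have "((\<lambda>m::nat. (real m * L) ^ d / exp (real m * L)) \<longlongrightarrow> 0) sequentially"
    by (rule filterlim_compose[OF tendsto_power_div_exp_0 f])
  then have "((\<lambda>m::nat. (real m * L) ^ d / exp (real m * L) / L ^ d) \<longlongrightarrow> 0 / L^d) sequentially"
    by (intro tendsto_divide tendsto_const) (use L in auto)
  moreover have "(real m * L) ^ d / exp (real m * L) / L ^ d = real m ^ d / r ^ m" for m :: nat
  proof -
    have "exp (real m * L) = r ^ m" unfolding L_def using r
      by (simp add: exp_of_nat_mult)
    then show ?thesis using L by (simp add: power_mult_distrib)
  qed
  ultimately have lim1: "((\<lambda>m::nat. real m ^ d / r ^ m) \<longlongrightarrow> 0) sequentially" by simp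
  have lim2: "((\<lambda>m::nat. (1/r) ^ m) \<longlongrightarrow> 0) sequentially"
    by (rule LIMSEQ_power_zero) (use r in auto)
  have "((\<lambda>m::nat. C1 * (1/r) ^ m + C2 * (real m ^ d / r ^ m)) \<longlongrightarrow> C1 * 0 + C2 * 0) sequentially"
    by (intro tendsto_intros lim1 lim2)
  then have "\<forall>\<^sub>F m in sequentially. C1 * (1/r) ^ m + C2 * (real m ^ d / r ^ m) < 1"
    by (intro order_tendstoD(2)) auto
  then obtain M where M: "\<And>m. m \<ge> M \<Longrightarrow> C1 * (1/r) ^ m + C2 * (real m ^ d / r ^ m) < 1"
    unfolding eventually_sequentially by blast
  have "M \<le> 2^M" by (simp add: less_exp less_imp_le)
  from M[OF this] have "C1 * (1/r) ^ (2^M) + C2 * (real (2^M) ^ d / r ^ (2^M)) < 1" .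
  moreover have rp: "r ^ (2^M) > 0" using r by simp
  ultimately have "(C1 * (1/r) ^ (2^M) + C2 * (real (2^M) ^ d / r ^ (2^M))) * r^(2^M) < r^(2^M)"
    by simp
  then have "C1 + C2 * real (2^M) ^ d < r ^ (2^M)"
    using rp r by (simp add: algebra_simps power_one_over)
  then show ?thesis by blast
qed

lemma semiring_hom_cor: "semiring_hom (complex_of_real)"
  by unfold_locales auto

lemma pow_mat_add_entry:
  fixes M :: "'a::comm_ring_1 mat"
  assumes M: "M \<in> carrier_mat n n"
  shows "M ^\<^sub>m (a + b) = M ^\<^sub>m a * M ^\<^sub>m b"
proof (induct b)
  case 0 then show ?case using M by simp
next
  case (Suc b)
  have "M ^\<^sub>m (a + Suc b) = M ^\<^sub>m (a + b) * M" by simp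
  also have "\<dots> = M ^\<^sub>m a * M ^\<^sub>m b * M" using Suc by simp
  also have "\<dots> = M ^\<^sub>m a * (M ^\<^sub>m b * M)"
    by (rule assoc_mult_mat[of _ n n _ n _ n]) (use M in auto)
  finally show ?case by simp
qed

lemma pow_mat_comm:
  fixes M :: "'a::comm_ring_1 mat"
  assumes M: "M \<in> carrier_mat n n"
  shows "M ^\<^sub>m k * M = M * M ^\<^sub>m k"
proof -
  have "M ^\<^sub>m k * M = M ^\<^sub>m (k + 1)" by simp
  also have "\<dots> = M ^\<^sub>m (1 + k)" by (simp add: add.commute)
  also have "\<dots> = M ^\<^sub>m 1 * M ^\<^sub>m k" by (rule pow_mat_add_entry[OF M])
  also have "M ^\<^sub>m 1 = M" using M by simp
  finally show ?thesis .
qed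

lemma pow_mat_sym:
  fixes M :: "'a::comm_ring_1 mat"
  assumes M: "M \<in> carrier_mat n n" and sym: "transpose_mat M = M"
  shows "transpose_mat (M ^\<^sub>m k) = M ^\<^sub>m k"
proof (induct k)
  case 0 then show ?case using M by simp
next
  case (Suc k)
  have "transpose_mat (M ^\<^sub>m Suc k) = transpose_mat (M ^\<^sub>m k * M)" by simp
  also have "\<dots> = transpose_mat M * transpose_mat (M ^\<^sub>m k)"
    by (rule transpose_mult[of _ n n _ n]) (use M in auto)
  also have "\<dots> = M * M ^\<^sub>m k" using Suc sym by simp
  also have "\<dots> = M ^\<^sub>m Suc k" using pow_mat_comm[OF M] by simp
  finally show ?case .
qed

lemma cs_sum:
  fixes x y :: "nat \<Rightarrow> real"
  assumes X: "(\<Sum>l<n. (x l)^2) > 0"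
  shows "(\<Sum>l<n. x l * y l)^2 \<le> (\<Sum>l<n. (x l)^2) * (\<Sum>l<n. (y l)^2)"
proof -
  define X where "X = (\<Sum>l<n. (x l)^2)"
  define S where "S = (\<Sum>l<n. x l * y l)"
  define Y where "Y = (\<Sum>l<n. (y l)^2)"
  define t where "t = S / X"
  have "0 \<le> (\<Sum>l<n. (y l - t * x l)^2)" by (simp add: sum_nonneg)
  also have "\<dots> = Y - 2 * t * S + t^2 * X"
    unfolding Y_def S_def X_def
    by (simp add: power2_diff sum.distrib sum_subtractf sum_distrib_left power_mult_distrib algebra_simps)
  also have "\<dots> = Y - S^2 / X" unfolding t_def using X unfolding X_def[symmetric]
    by (simp add: power2_eq_square field_simps)
  finally have "S^2 / X \<le> Y" by simp
  then show ?thesis using X unfolding X_def[symmetric] S_def[symmetric] Y_def[symmetric]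
    by (simp add: field_simps)
qed

lemma qf_le:
  fixes M :: "real mat" and x :: "nat \<Rightarrow> real"
  assumes M: "M \<in> carrier_mat n n" and sym: "transpose_mat M = M"
    and ev: "\<And>\<mu>. eigenvalue (map_mat complex_of_real M) \<mu> \<Longrightarrow> cmod \<mu> \<le> 1"
  shows "(\<Sum>i<n. \<Sum>j<n. x i * M $$ (i,j) * x j) \<le> (\<Sum>i<n. (x i)^2)"
proof (rule ccontr)
  assume contra: "\<not> ?thesis"
  define P where "P k = M ^\<^sub>m k" for k
  define s where "s k = (\<Sum>i<n. \<Sum>j<n. x i * P k $$ (i,j) * x j)" for k
  define X where "X = (\<Sum>i<n. (x i)^2)"
  have P1: "P 1 = M" unfolding P_def using M by simp
  have s1: "s 1 > X" using contra unfolding s_def X_def P1 by simp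
  have X0: "X \<ge> 0" unfolding X_def by (simp add: sum_nonneg)
  have Xpos: "X > 0"
  proof (rule ccontr)
    assume "\<not> X > 0"
    then have "X = 0" using X0 by simp
    then have "\<forall>i\<in>{..<n}. (x i)^2 = 0" unfolding X_def
      by (subst sum_nonneg_eq_0_iff[symmetric]) auto
    then have "s 1 = 0" unfolding s_def by simp
    with s1 \<open>X = 0\<close> show False by simp
  qed
  have n0: "n > 0" using Xpos unfolding X_def by (cases n) auto
  have Pc: "P k \<in> carrier_mat n n" for k unfolding P_def using M by simp
  have Psym: "P k $$ (i,j) = P k $$ (j,i)" if "i < n" "j < n" for k i j
  proof -
    have "transpose_mat (P k) = P k" unfolding P_def by (rule pow_mat_sym[OF M sym])
    then have "transpose_mat (P k) $$ (j,i) = P k $$ (j,i)" by simp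
    then show ?thesis using that Pc[of k] by auto
  qed
  have Padd: "P (a + b) $$ (i,j) = (\<Sum>l<n. P a $$ (i,l) * P b $$ (l,j))" if "i < n" "j < n" for a b i j
  proof -
    have "P (a + b) = P a * P b" unfolding P_def by (rule pow_mat_add_entry[OF M])
    then show ?thesis using that Pc[of a] Pc[of b]
      by (simp add: scalar_prod_def atLeast0LessThan)
  qed
  define y where "y k l = (\<Sum>j<n. P k $$ (l,j) * x j)" for k l
  have sk: "s k = (\<Sum>l<n. x l * y k l)" for k
    unfolding s_def y_def by (simp add: sum_distrib_left algebra_simps)
  have s2k: "s (k + k) = (\<Sum>l<n. (y k l)^2)" for k
  proof -
    have "s (k + k) = (\<Sum>i<n. \<Sum>j<n. x i * (\<Sum>l<n. P k $$ (i,l) * P k $$ (l,j)) * x j)"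
      unfolding s_def by (intro sum.cong refl) (simp add: Padd)
    also have "\<dots> = (\<Sum>i<n. \<Sum>j<n. \<Sum>l<n. (P k $$ (l,i) * x i) * (P k $$ (l,j) * x j))"
    proof (intro sum.cong refl)
      fix i j assume i: "i \<in> {..<n}" and j: "j \<in> {..<n}"
      have "x i * (\<Sum>l<n. P k $$ (i,l) * P k $$ (l,j)) * x j
          = (\<Sum>l<n. x i * (P k $$ (i,l) * P k $$ (l,j)) * x j)"
        by (simp add: sum_distrib_left sum_distrib_right)
      also have "\<dots> = (\<Sum>l<n. (P k $$ (l,i) * x i) * (P k $$ (l,j) * x j))"
      proof (rule sum.cong[OF refl])
        fix l assume l: "l \<in> {..<n}"
        have e: "P k $$ (i,l) = P k $$ (l,i)" using i l by (intro Psym) auto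
        show "x i * (P k $$ (i,l) * P k $$ (l,j)) * x j = (P k $$ (l,i) * x i) * (P k $$ (l,j) * x j)"
          unfolding e by (simp only: mult_ac)
      qed
      finally show "x i * (\<Sum>l<n. P k $$ (i,l) * P k $$ (l,j)) * x j
          = (\<Sum>l<n. (P k $$ (l,i) * x i) * (P k $$ (l,j) * x j))" .
    qed
    also have "\<dots> = (\<Sum>l<n. \<Sum>i<n. \<Sum>j<n. (P k $$ (l,i) * x i) * (P k $$ (l,j) * x j))"
      by (subst sum.swap, rule sum.cong[OF refl], rule sum.swap)
    also have "\<dots> = (\<Sum>l<n. (y k l)^2)"
      unfolding y_def power2_eq_square by (simp add: sum_product)
    finally show ?thesis .
  qed
  define a where "a = s 1 / X"
  have a1: "a > 1" unfolding a_def using s1 Xpos by simp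
  have grow: "s (2^j) \<ge> a ^ (2^j) * X" for j
  proof (induct j)
    case 0 then show ?case unfolding a_def using Xpos by simp
  next
    case (Suc j)
    have nn: "0 \<le> a ^ (2^j) * X" using a1 Xpos by simp
    have "(a ^ (2^j) * X)^2 \<le> (s (2^j))^2"
      using Suc nn by (intro power_mono) auto
    also have "\<dots> \<le> X * (\<Sum>l<n. (y (2^j) l)^2)"
      unfolding sk X_def by (rule cs_sum) (use Xpos X_def in simp)
    also have "\<dots> = X * s (2^j + 2^j)" by (simp add: s2k)
    finally have "(a ^ (2^j) * X)^2 \<le> X * s (2^(Suc j))" by (simp add: mult_2)
    then have "a ^ (2^(Suc j)) * X * X \<le> s (2^(Suc j)) * X"
      by (simp add: power2_eq_square power_mult power_mult_distrib algebra_simps)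
    then show ?case using Xpos by simp
  qed
  define CM where "CM = map_mat complex_of_real M"
  have CMc: "CM \<in> carrier_mat n n" unfolding CM_def using M by simp
  have "spectral_radius CM \<le> 1"
  proof -
    have "spectral_radius CM \<in> norm ` spectrum CM" by (rule spectral_radius_mem_max(1)[OF CMc n0])
    then obtain \<mu> where "eigenvalue CM \<mu>" "spectral_radius CM = cmod \<mu>"
      unfolding spectrum_def by auto
    then show ?thesis using ev unfolding CM_def by auto
  qed
  from spectral_radius_jnf_norm_bound_le_1_upper_triangular[OF CMc this]
  obtain c1 c2 where cb: "\<And>k. norm_bound (CM ^\<^sub>m k) (c1 + c2 * of_nat k ^ (n - 1))" by blast
  have entry_bd: "\<bar>P k $$ (i,j)\<bar> \<le> c1 + c2 * real k ^ (n - 1)" if "i < n" "j < n" for k i j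
  proof -
    have "CM ^\<^sub>m k = map_mat complex_of_real (P k)" unfolding CM_def P_def
      by (rule semiring_hom.mat_hom_pow[OF semiring_hom_cor M, symmetric])
    then have "norm ((map_mat complex_of_real (P k)) $$ (i,j)) \<le> c1 + c2 * real k ^ (n - 1)"
      using cb[of k] that CMc unfolding norm_bound_def by (metis pow_mat_dim_square)
    then show ?thesis using that Pc[of k] by simp
  qed
  define K where "K = (\<Sum>i<n. \<bar>x i\<bar>)^2"
  have sbd: "s k \<le> (c1 + c2 * real k ^ (n - 1)) * K" for k
  proof -
    have "s k \<le> (\<Sum>i<n. \<Sum>j<n. \<bar>x i\<bar> * (c1 + c2 * real k ^ (n - 1)) * \<bar>x j\<bar>)"
      unfolding s_def
    proof (intro sum_mono)
      fix i j assume "i \<in> {..<n}" "j \<in> {..<n}"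
      then have b: "\<bar>P k $$ (i,j)\<bar> \<le> c1 + c2 * real k ^ (n - 1)" by (intro entry_bd) auto
      have "x i * P k $$ (i,j) * x j \<le> \<bar>x i * P k $$ (i,j) * x j\<bar>" by simp
      also have "\<dots> = \<bar>x i\<bar> * \<bar>P k $$ (i,j)\<bar> * \<bar>x j\<bar>" by (simp add: abs_mult)
      also have "\<dots> \<le> \<bar>x i\<bar> * (c1 + c2 * real k ^ (n - 1)) * \<bar>x j\<bar>"
        using b by (intro mult_right_mono mult_left_mono) auto
      finally show "x i * P k $$ (i,j) * x j \<le> \<bar>x i\<bar> * (c1 + c2 * real k ^ (n - 1)) * \<bar>x j\<bar>" .
    qed
    also have "\<dots> = (c1 + c2 * real k ^ (n - 1)) * K"
      unfolding K_def power2_eq_square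
      by (simp add: sum_product sum_distrib_left algebra_simps)
    finally show ?thesis .
  qed
  have "\<forall>j. a ^ (2^j) \<le> c1 * K / X + c2 * K / X * real (2^j) ^ (n - 1)"
  proof
    fix j
    have "a ^ (2^j) * X \<le> (c1 + c2 * real (2^j) ^ (n - 1)) * K"
      using grow[of j] sbd[of "2^j"] by linarith
    then show "a ^ (2^j) \<le> c1 * K / X + c2 * K / X * real (2^j) ^ (n - 1)"
      using Xpos by (simp add: field_simps)
  qed
  with poly_exp_beat[OF a1, of "c1 * K / X" "c2 * K / X" "n - 1"] show False
    by (meson not_less)
qed

definition aff_mat :: "nat \<Rightarrow> real \<Rightarrow> real \<Rightarrow> real mat \<Rightarrow> real mat" where
  "aff_mat n a b M = mat n n (\<lambda>(i,j). a * M $$ (i,j) + (if i = j then b else 0))"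

lemma aff_eig:
  fixes M :: "real mat"
  assumes M: "M \<in> carrier_mat n n" and a: "a \<noteq> 0"
    and e: "eigenvalue (map_mat complex_of_real (aff_mat n a b M)) \<mu>"
  shows "eigenvalue (map_mat complex_of_real M) ((\<mu> - complex_of_real b) / complex_of_real a)"
proof -
  let ?N = "map_mat complex_of_real (aff_mat n a b M)"
  let ?Mc = "map_mat complex_of_real M"
  from e obtain v where ev: "eigenvector ?N v \<mu>" unfolding eigenvalue_def by auto
  then have v: "v \<in> carrier_vec n" "v \<noteq> 0\<^sub>v n" and Nv: "?N *\<^sub>v v = \<mu> \<cdot>\<^sub>v v"
    unfolding eigenvector_def aff_mat_def by auto
  have "?Mc *\<^sub>v v = ((\<mu> - complex_of_real b) / complex_of_real a) \<cdot>\<^sub>v v"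
  proof (rule eq_vecI)
    fix i assume "i < dim_vec (((\<mu> - complex_of_real b) / complex_of_real a) \<cdot>\<^sub>v v)"
    then have i: "i < n" using v by simp
    have "(?N *\<^sub>v v) $ i = (\<Sum>j<n. (complex_of_real a * ?Mc $$ (i,j) + (if i = j then complex_of_real b else 0)) * v $ j)"
      using i v M unfolding aff_mat_def by (simp add: scalar_prod_def atLeast0LessThan) (intro sum.cong refl; simp)
    also have "\<dots> = (\<Sum>j<n. complex_of_real a * (?Mc $$ (i,j) * v $ j) + (if i = j then complex_of_real b * v $ j else 0))"
      by (intro sum.cong refl) (auto simp: algebra_simps)
    also have "\<dots> = complex_of_real a * (\<Sum>j<n. ?Mc $$ (i,j) * v $ j) + complex_of_real b * v $ i"
      using i by (simp add: sum.distrib sum_distrib_left)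
    also have "(\<Sum>j<n. ?Mc $$ (i,j) * v $ j) = (?Mc *\<^sub>v v) $ i"
      using i v M by (simp add: scalar_prod_def atLeast0LessThan)
    finally have "(?Mc *\<^sub>v v) $ i = ((?N *\<^sub>v v) $ i - complex_of_real b * v $ i) / complex_of_real a"
      using a by (simp add: field_simps)
    also have "\<dots> = ((\<mu> - complex_of_real b) / complex_of_real a) * v $ i"
      using Nv i v by (simp add: field_simps)
    finally show "(?Mc *\<^sub>v v) $ i = (((\<mu> - complex_of_real b) / complex_of_real a) \<cdot>\<^sub>v v) $ i"
      using i v by simp
  qed (use M v in simp)
  then show ?thesis unfolding eigenvalue_def eigenvector_def using v M by auto
qed

lemma aff_qf:
  "(\<Sum>i<n. \<Sum>j<n. x i * aff_mat n a b M $$ (i,j) * x j)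
   = a * (\<Sum>i<n. \<Sum>j<n. x i * M $$ (i,j) * x j) + b * (\<Sum>i<n. (x i)^2)"
proof -
  have "(\<Sum>i<n. \<Sum>j<n. x i * aff_mat n a b M $$ (i,j) * x j)
      = (\<Sum>i<n. a * (\<Sum>j<n. x i * M $$ (i,j) * x j) + b * (x i)^2)"
  proof (rule sum.cong[OF refl])
    fix i assume i: "i \<in> {..<n}"
    have "(\<Sum>j<n. x i * aff_mat n a b M $$ (i,j) * x j)
        = (\<Sum>j<n. a * (x i * M $$ (i,j) * x j) + (if i = j then b * (x i)^2 else 0))"
      using i unfolding aff_mat_def by (intro sum.cong refl) (auto simp: algebra_simps power2_eq_square)
    also have "\<dots> = a * (\<Sum>j<n. x i * M $$ (i,j) * x j) + b * (x i)^2"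
      using i by (simp add: sum.distrib sum_distrib_left)
    finally show "(\<Sum>j<n. x i * aff_mat n a b M $$ (i,j) * x j) = a * (\<Sum>j<n. x i * M $$ (i,j) * x j) + b * (x i)^2" .
  qed
  also have "\<dots> = a * (\<Sum>i<n. \<Sum>j<n. x i * M $$ (i,j) * x j) + b * (\<Sum>i<n. (x i)^2)"
    by (simp add: sum.distrib sum_distrib_left)
  finally show ?thesis .
qed

lemma qf_bound:
  fixes M :: "real mat" and x :: "nat \<Rightarrow> real"
  assumes M: "M \<in> carrier_mat n n" and sym: "transpose_mat M = M"
    and ev: "eigs_in_interval M"
  shows "\<bar>\<Sum>i<n. \<Sum>j<n. x i * M $$ (i,j) * x j\<bar> \<le> 2 * (\<Sum>i<n. (x i)^2)"
proof -
  have dM: "dim_row M = n" using M by simp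
  have symN: "transpose_mat (aff_mat n a b M) = aff_mat n a b M" for a b
  proof (rule eq_matI)
    fix i j assume "i < dim_row (aff_mat n a b M)" "j < dim_col (aff_mat n a b M)"
    then have ij: "i < n" "j < n" unfolding aff_mat_def by auto
    have "M $$ (j,i) = M $$ (i,j)"
      using arg_cong[OF sym, of "\<lambda>A. A $$ (j,i)"] ij M by simp
    then show "transpose_mat (aff_mat n a b M) $$ (i,j) = aff_mat n a b M $$ (i,j)"
      using ij unfolding aff_mat_def by auto
  qed (auto simp: aff_mat_def)
  have Nc: "aff_mat n a b M \<in> carrier_mat n n" for a b unfolding aff_mat_def by simp
  have evM: "\<And>l. eigenvalue (map_mat complex_of_real M) l \<Longrightarrow> l \<in> \<real> \<and> -2 \<le> Re l \<and> Re l \<le> 2"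
    using ev unfolding eigs_in_interval_def by blast
  have b1: "(\<Sum>i<n. \<Sum>j<n. x i * aff_mat n (1/4) (1/2) M $$ (i,j) * x j) \<le> (\<Sum>i<n. (x i)^2)"
  proof (rule qf_le[OF Nc symN])
    fix \<mu> assume "eigenvalue (map_mat complex_of_real (aff_mat n (1/4) (1/2) M)) \<mu>"
    from aff_eig[OF M _ this] have "eigenvalue (map_mat complex_of_real M) ((\<mu> - 1/2) / (1/4))" by simp
    from evM[OF this] have h: "(\<mu> - 1/2) / (1/4) \<in> \<real>" "-2 \<le> Re ((\<mu> - 1/2) / (1/4))" "Re ((\<mu> - 1/2) / (1/4)) \<le> 2"
      by blast+
    from h(1) obtain r where r0: "(\<mu> - 1/2) / (1/4) = complex_of_real r" by (rule Reals_cases)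
    from r0 h have r: "(\<mu> - 1/2) / (1/4) = complex_of_real r" "-2 \<le> r" "r \<le> 2" by (simp_all only: Re_complex_of_real)
    have "\<mu> = ((\<mu> - 1/2) / (1/4)) / 4 + 1/2" by (simp add: field_simps)
    also have "\<dots> = complex_of_real (r/4 + 1/2)" unfolding r(1) by simp
    finally have "\<mu> = complex_of_real (r/4 + 1/2)" .
    then have "cmod \<mu> = \<bar>r/4 + 1/2\<bar>" by (simp only: norm_of_real)
    then show "cmod \<mu> \<le> 1" using r by simp
  qed
  have b2: "(\<Sum>i<n. \<Sum>j<n. x i * aff_mat n (-1/4) (1/2) M $$ (i,j) * x j) \<le> (\<Sum>i<n. (x i)^2)"
  proof (rule qf_le[OF Nc symN])
    fix \<mu> assume "eigenvalue (map_mat complex_of_real (aff_mat n (-1/4) (1/2) M)) \<mu>"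
    from aff_eig[OF M _ this] have "eigenvalue (map_mat complex_of_real M) ((\<mu> - 1/2) / (-1/4))" by simp
    from evM[OF this] have h: "(\<mu> - 1/2) / (-1/4) \<in> \<real>" "-2 \<le> Re ((\<mu> - 1/2) / (-1/4))" "Re ((\<mu> - 1/2) / (-1/4)) \<le> 2"
      by blast+
    from h(1) obtain r where r0: "(\<mu> - 1/2) / (-1/4) = complex_of_real r" by (rule Reals_cases)
    from r0 h have r: "(\<mu> - 1/2) / (-1/4) = complex_of_real r" "-2 \<le> r" "r \<le> 2" by (simp_all only: Re_complex_of_real)
    have "\<mu> = 1/2 - ((\<mu> - 1/2) / (-1/4)) / 4" by (simp add: field_simps)
    also have "\<dots> = complex_of_real (1/2 - r/4)" unfolding r(1) by simp
    finally have "\<mu> = complex_of_real (1/2 - r/4)" .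
    then have "cmod \<mu> = \<bar>1/2 - r/4\<bar>" by (simp only: norm_of_real)
    then show "cmod \<mu> \<le> 1" using r by simp
  qed
  from b1 b2 show ?thesis unfolding aff_qf by (simp add: abs_le_iff)
qed

definition cw :: "(nat \<Rightarrow> nat \<Rightarrow> bool) \<Rightarrow> nat \<Rightarrow> (nat \<Rightarrow> nat) \<Rightarrow> bool" where
  "cw R k g \<longleftrightarrow> k \<ge> 1 \<and> (\<forall>t<k. R (g t) (g ((t+1) mod k)))"

definition ccnt :: "(nat \<Rightarrow> nat \<Rightarrow> nat) \<Rightarrow> nat \<Rightarrow> (nat \<Rightarrow> nat) \<Rightarrow> nat" where
  "ccnt f k g = (\<Sum>t<k. f (g t) (g ((t+1) mod k)))"

lemma sum_lessThan_add':
  fixes G :: "nat \<Rightarrow> 'a::comm_monoid_add"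
  shows "(\<Sum>t<d+m. G t) = (\<Sum>t<d. G t) + (\<Sum>t<m. G (d+t))"
  by (induct m) (simp_all add: add.assoc)

lemma sum_rot1:
  fixes G :: "nat \<Rightarrow> 'a::comm_monoid_add"
  assumes "k > 0"
  shows "(\<Sum>t<k. G ((t+1) mod k)) = (\<Sum>t<k. G t)"
proof -
  obtain m where k: "k = Suc m" using assms by (cases k) auto
  have "(\<Sum>t<Suc m. G ((t+1) mod Suc m)) = (\<Sum>t<m. G ((t+1) mod Suc m)) + G 0"
    by (simp add: sum.lessThan_Suc)
  also have "(\<Sum>t<m. G ((t+1) mod Suc m)) = (\<Sum>t<m. G (Suc t))"
    by (intro sum.cong refl) simp
  also have "\<dots> + G 0 = (\<Sum>t<Suc m. G t)"
    by (simp only: sum.lessThan_Suc_shift add.commute)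
  finally show ?thesis using k by simp
qed

lemma sum_rot:
  fixes G :: "nat \<Rightarrow> 'a::comm_monoid_add"
  assumes "k > 0"
  shows "(\<Sum>t<k. G ((a+t) mod k)) = (\<Sum>t<k. G t)"
proof (induct a)
  case 0 then show ?case by (intro sum.cong refl) (simp)
next
  case (Suc a)
  have "(\<Sum>t<k. G ((Suc a + t) mod k)) = (\<Sum>t<k. (\<lambda>u. G ((a + u) mod k)) ((t+1) mod k))"
    by (intro sum.cong refl) (simp add: mod_add_right_eq add.commute add.left_commute)
  also have "\<dots> = (\<Sum>t<k. G ((a + t) mod k))" by (rule sum_rot1[OF assms])
  finally show ?case using Suc by simp
qed

lemma sum_split_rot:
  fixes e :: "nat \<Rightarrow> 'a::comm_monoid_add"
  assumes "d \<le> k"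
  shows "(\<Sum>t<d. e ((a+t) mod k)) + (\<Sum>t<k-d. e ((a+d+t) mod k)) = (\<Sum>t<k. e ((a+t) mod k))"
proof -
  have "(\<Sum>t<k. e ((a+t) mod k)) = (\<Sum>t<d + (k-d). e ((a+t) mod k))" using assms by simp
  also have "\<dots> = (\<Sum>t<d. e ((a+t) mod k)) + (\<Sum>t<k-d. e ((a+(d+t)) mod k))"
    by (rule sum_lessThan_add')
  finally show ?thesis by (simp add: add.assoc)
qed

lemma arc:
  fixes R :: "nat \<Rightarrow> nat \<Rightarrow> bool"
  assumes c: "cw R k g" and a: "a < k" and L: "L \<ge> 1"
    and close: "R (g ((a+L-1) mod k)) (g a)"
  shows "cw R L (\<lambda>t. g ((a+t) mod k))"
    "ccnt f L (\<lambda>t. g ((a+t) mod k))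
       = (\<Sum>t<L-1. f (g ((a+t) mod k)) (g (((a+t) mod k + 1) mod k))) + f (g ((a+L-1) mod k)) (g a)"
proof -
  have k: "k \<ge> 1" and e: "\<And>t. t < k \<Longrightarrow> R (g t) (g ((t+1) mod k))" using c unfolding cw_def by auto
  have step: "g ((a + (t+1) mod L) mod k) = g (((a+t) mod k + 1) mod k)" if "t + 1 < L" for t
    using that by (simp add: mod_Suc_eq)
  have last: "g ((a + (t+1) mod L) mod k) = g a" if "t + 1 = L" for t
    using that a by simp
  show "cw R L (\<lambda>t. g ((a+t) mod k))"
    unfolding cw_def
  proof (intro conjI allI impI L)
    fix t assume t: "t < L"
    show "R (g ((a+t) mod k)) (g ((a + (t+1) mod L) mod k))"
    proof (cases "t + 1 < L")
      case True
      then show ?thesis using e[of "(a+t) mod k"] k step[OF True] by simp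
    next
      case False
      then have "t + 1 = L" using t by simp
      then have "a + L - 1 = a + t" by simp
      then show ?thesis using close last[of t] \<open>t + 1 = L\<close> by simp
    qed
  qed
  have "ccnt f L (\<lambda>t. g ((a+t) mod k)) = (\<Sum>t<L. f (g ((a+t) mod k)) (g ((a + (t+1) mod L) mod k)))"
    unfolding ccnt_def by simp
  also have "\<dots> = (\<Sum>t<Suc (L-1). f (g ((a+t) mod k)) (g ((a + (t+1) mod L) mod k)))"
    using L by simp
  also have "\<dots> = (\<Sum>t<L-1. f (g ((a+t) mod k)) (g ((a + (t+1) mod L) mod k)))
                 + f (g ((a+(L-1)) mod k)) (g ((a + (L-1+1) mod L) mod k))"
    by (rule sum.lessThan_Suc)
  also have "(\<Sum>t<L-1. f (g ((a+t) mod k)) (g ((a + (t+1) mod L) mod k)))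
      = (\<Sum>t<L-1. f (g ((a+t) mod k)) (g (((a+t) mod k + 1) mod k)))"
    by (intro sum.cong refl) (simp add: mod_Suc_eq)
  also have "g ((a + (L-1+1) mod L) mod k) = g a" using last[of "L-1"] L by simp
  finally show "ccnt f L (\<lambda>t. g ((a+t) mod k))
       = (\<Sum>t<L-1. f (g ((a+t) mod k)) (g (((a+t) mod k + 1) mod k))) + f (g ((a+L-1) mod k)) (g a)"
    using L by (simp add: add.assoc)
qed

lemma sum_last:
  fixes G :: "nat \<Rightarrow> 'a::comm_monoid_add"
  shows "L \<ge> 1 \<Longrightarrow> (\<Sum>t<L-1. G t) + G (L-1) = (\<Sum>t<L. G t)"
  by (cases L) auto

lemma closed_walk_even:
  fixes R :: "nat \<Rightarrow> nat \<Rightarrow> bool" and f :: "nat \<Rightarrow> nat \<Rightarrow> nat"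
  assumes symR: "\<And>x y. R x y \<Longrightarrow> R y x" and irr: "\<And>x. \<not> R x x"
    and symf: "\<And>x y. f x y = f y x"
    and H: "\<And>k g. k \<ge> 3 \<Longrightarrow> inj_on g {..<k} \<Longrightarrow> cw R k g \<Longrightarrow>
              (\<forall>t<k. \<forall>t'<k. R (g t) (g t') \<longrightarrow> t' = (t+1) mod k \<or> t = (t'+1) mod k) \<Longrightarrow>
              even (ccnt f k g)"
  shows "cw R k g \<Longrightarrow> even (ccnt f k g)"
proof (induction k arbitrary: g rule: less_induct)
  case (less k)
  have c: "cw R k g" by fact
  have k1: "k \<ge> 1" and edge: "\<And>t. t < k \<Longrightarrow> R (g t) (g ((t+1) mod k))" using c unfolding cw_def by auto
  define e where "e s = f (g s) (g ((s+1) mod k))" for s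
  have cc: "ccnt f k g = (\<Sum>t<k. e t)" unfolding ccnt_def e_def ..
  have rot: "(\<Sum>t<k. e ((a+t) mod k)) = ccnt f k g" for a unfolding cc by (rule sum_rot) (use k1 in simp)
  have split: "(\<Sum>t<d. e ((a+t) mod k)) + (\<Sum>t<k-d. e ((a+d+t) mod k)) = ccnt f k g" if "d \<le> k" for a d
    using sum_split_rot[OF that, of e a] rot[of a] by simp
  show ?case
  proof (cases "inj_on g {..<k}")
    case False
    then obtain i j where ij: "i < j" "j < k" "g i = g j"
      unfolding inj_on_def by (metis lessThan_iff linorder_neqE_nat)
    define L1 where "L1 = j - i"
    have L1: "L1 \<ge> 1" "L1 < k" using ij unfolding L1_def by auto
    have cl1: "R (g ((i+L1-1) mod k)) (g i)"
    proof -
      have "i + L1 - 1 = j - 1" using ij unfolding L1_def by simp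
      moreover have "((j-1)+1) mod k = j" using ij by simp
      ultimately show ?thesis using edge[of "j-1"] ij by simp
    qed
    have ik: "i < k" using ij by simp
    note a1 = arc(1)[OF c ik L1(1) cl1] arc(2)[OF c ik L1(1) cl1, of f]
    have cnt1: "ccnt f L1 (\<lambda>t. g ((i+t) mod k)) = (\<Sum>t<L1. e ((i+t) mod k))"
    proof -
      have last: "g ((((i+L1-1) mod k) + 1) mod k) = g i"
      proof -
        have "i + L1 - 1 = j - 1" using ij unfolding L1_def by simp
        moreover have "(j - 1) mod k + 1 = j" using ij by simp
        ultimately show ?thesis using ij by simp
      qed
      have "ccnt f L1 (\<lambda>t. g ((i+t) mod k)) = (\<Sum>t<L1-1. e ((i+t) mod k)) + e ((i+L1-1) mod k)"
        using a1(2) ij last unfolding e_def by simp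
      also have "\<dots> = (\<Sum>t<L1. e ((i+t) mod k))"
        using sum_last[OF L1(1), of "\<lambda>t. e ((i+t) mod k)"] L1(1) by (simp add: Nat.add_diff_assoc)
      finally show ?thesis .
    qed
    define L2 where "L2 = k - j + i"
    have L2: "L2 \<ge> 1" "L2 < k" using ij unfolding L2_def by auto
    define s where "s = (j + L2 - 1) mod k"
    have e1: "j + L2 - 1 + 1 = k + i" using ij unfolding L2_def by simp
    have "(s + 1) mod k = (j + L2 - 1 + 1) mod k" unfolding s_def by (simp add: mod_Suc_eq)
    also have "\<dots> = (k + i) mod k" by (simp only: e1)
    also have "\<dots> = i" using ij by simp
    finally have s: "(s + 1) mod k = i" .
    have cl2: "R (g ((j+L2-1) mod k)) (g j)"
      using edge[of s] s ij unfolding s_def by simp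
    note a2 = arc(1)[OF c ij(2) L2(1) cl2] arc(2)[OF c ij(2) L2(1) cl2, of f]
    have cnt2: "ccnt f L2 (\<lambda>t. g ((j+t) mod k)) = (\<Sum>t<L2. e ((j+t) mod k))"
    proof -
      have last: "g ((((j+L2-1) mod k) + 1) mod k) = g j"
        using s ij unfolding s_def by simp
      have "ccnt f L2 (\<lambda>t. g ((j+t) mod k)) = (\<Sum>t<L2-1. e ((j+t) mod k)) + e ((j+L2-1) mod k)"
        using a2(2) last unfolding e_def by simp
      also have "\<dots> = (\<Sum>t<L2. e ((j+t) mod k))"
        using sum_last[OF L2(1), of "\<lambda>t. e ((j+t) mod k)"] L2(1) by (simp add: Nat.add_diff_assoc)
      finally show ?thesis .
    qed
    have ev1: "even (ccnt f L1 (\<lambda>t. g ((i+t) mod k)))"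
      using less.IH[OF L1(2) a1(1)] ij by simp
    have ev2: "even (ccnt f L2 (\<lambda>t. g ((j+t) mod k)))"
      using less.IH[OF L2(2) a2(1)] by simp
    have "ccnt f k g = (\<Sum>t<L1. e ((i+t) mod k)) + (\<Sum>t<L2. e ((j+t) mod k))"
      using split[of L1 i] ij unfolding L1_def L2_def by simp
    then show ?thesis using ev1 ev2 cnt1 cnt2 by simp
  next
    case inj: True
    consider "k = 1" | "k = 2" | "k \<ge> 3" using k1 by linarith
    then show ?thesis
    proof cases
      case 1
      then have False using edge[of 0] irr by simp
      then show ?thesis ..
    next
      case 2
      then have "ccnt f k g = f (g 0) (g 1) + f (g 1) (g 0)"
        unfolding ccnt_def by (simp add: numeral_2_eq_2)
      then show ?thesis using symf by simp
    next
      case k3: 3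
      show ?thesis
      proof (cases "\<forall>t<k. \<forall>t'<k. R (g t) (g t') \<longrightarrow> t' = (t+1) mod k \<or> t = (t'+1) mod k")
        case True
        then show ?thesis using H[OF k3 inj c] by blast
      next
        case False
        then obtain t t' where tt: "t < k" "t' < k" "R (g t) (g t')"
          "t' \<noteq> (t+1) mod k" "t \<noteq> (t'+1) mod k" by blast
        have "t \<noteq> t'" using tt irr by auto
        then obtain i j where ij: "i < j" "j < k" "R (g i) (g j)" "j \<noteq> (i+1) mod k" "i \<noteq> (j+1) mod k"
        proof (cases "t < t'")
          case True then show ?thesis using that tt by blast
        next
          case False then have "t' < t" using \<open>t \<noteq> t'\<close> by simp
          then show ?thesis using that[of t' t] tt symR by blast
        qed
        have ji: "j \<ge> i + 2" using ij by (cases "j = i + 1") auto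
        have notlast: "\<not> (i = 0 \<and> j = k - 1)" using ij k3 by auto
        define L1 where "L1 = j - i + 1"
        have L1: "L1 \<ge> 1" "L1 < k" using ij ji notlast unfolding L1_def by auto
        have cl1: "R (g ((i+L1-1) mod k)) (g i)"
          using ij symR unfolding L1_def by simp
        have ik: "i < k" using ij by simp
        note a1 = arc(1)[OF c ik L1(1) cl1] arc(2)[OF c ik L1(1) cl1, of f]
        define L2 where "L2 = k - j + i + 1"
        have L2: "L2 \<ge> 1" "L2 < k" using ij ji unfolding L2_def by auto
        have "j + L2 - 1 = k + i" using ij unfolding L2_def by simp
        then have jl: "(j + L2 - 1) mod k = i" using ij by simp
        have cl2: "R (g ((j+L2-1) mod k)) (g j)" using jl ij by simp
        note a2 = arc(1)[OF c ij(2) L2(1) cl2] arc(2)[OF c ij(2) L2(1) cl2, of f]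
        have ev1: "even (ccnt f L1 (\<lambda>t. g ((i+t) mod k)))"
          using less.IH[OF L1(2) a1(1)] ij by simp
        have ev2: "even (ccnt f L2 (\<lambda>t. g ((j+t) mod k)))"
          using less.IH[OF L2(2) a2(1)] by simp
        have c1: "ccnt f L1 (\<lambda>t. g ((i+t) mod k)) = (\<Sum>t<j-i. e ((i+t) mod k)) + f (g j) (g i)"
          using a1(2) ij unfolding e_def L1_def by simp
        have c2: "ccnt f L2 (\<lambda>t. g ((j+t) mod k)) = (\<Sum>t<k-(j-i). e ((j+t) mod k)) + f (g i) (g j)"
        proof -
          have "L2 - 1 = k - (j - i)" using ij unfolding L2_def by simp
          then show ?thesis using a2(2) jl unfolding e_def by simp
        qed
        have "ccnt f L1 (\<lambda>t. g ((i+t) mod k)) + ccnt f L2 (\<lambda>t. g ((j+t) mod k))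
            = ccnt f k g + 2 * f (g i) (g j)"
          using c1 c2 split[of "j-i" i] ij symf[of "g j" "g i"] by simp
        then have "even (ccnt f k g + 2 * f (g i) (g j))" using ev1 ev2 by (metis even_add)
        then show ?thesis by simp
      qed
    qed
  qed
qed

definition Bf :: "nat \<Rightarrow> (nat \<Rightarrow> nat \<Rightarrow> int) \<Rightarrow> (nat \<Rightarrow> real) \<Rightarrow> (nat \<Rightarrow> real) \<Rightarrow> real" where
  "Bf n W y z = (\<Sum>i<n. \<Sum>j<n. y i * real_of_int (W i j) * z j)"

definition ext :: "(nat \<Rightarrow> nat) \<Rightarrow> nat \<Rightarrow> (nat \<Rightarrow> real) \<Rightarrow> nat \<Rightarrow> real" where
  "ext g k Y i = (if i \<in> g ` {..<k} then Y (inv_into {..<k} g i) else 0)"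

lemma ext_sum:
  assumes inj: "inj_on g {..<k}" and gn: "g ` {..<k} \<subseteq> {..<n}"
  shows "(\<Sum>i<n. ext g k Y i * H i) = (\<Sum>t<k. Y t * H (g t))"
proof -
  have "(\<Sum>i<n. ext g k Y i * H i) = (\<Sum>i\<in>g ` {..<k}. ext g k Y i * H i)"
    by (rule sum.mono_neutral_right) (use gn in \<open>auto simp: ext_def\<close>)
  also have "\<dots> = (\<Sum>t<k. ext g k Y (g t) * H (g t))"
    by (rule sum.reindex[OF inj, unfolded comp_def])
  also have "\<dots> = (\<Sum>t<k. Y t * H (g t))"
    by (intro sum.cong refl) (simp add: ext_def inv_into_f_f[OF inj])
  finally show ?thesis .
qed

lemma Bf_ext:
  assumes inj: "inj_on g {..<k}" and gn: "g ` {..<k} \<subseteq> {..<n}"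
  shows "Bf n W (ext g k Y) (ext g k Z) = (\<Sum>t<k. \<Sum>t'<k. Y t * real_of_int (W (g t) (g t')) * Z t')"
proof -
  have "Bf n W (ext g k Y) (ext g k Z) = (\<Sum>i<n. ext g k Y i * (\<Sum>j<n. ext g k Z j * real_of_int (W i j)))"
    unfolding Bf_def by (simp add: sum_distrib_left mult_ac)
  also have "\<dots> = (\<Sum>t<k. Y t * (\<Sum>j<n. ext g k Z j * real_of_int (W (g t) j)))"
    by (rule ext_sum[OF inj gn])
  also have "\<dots> = (\<Sum>t<k. Y t * (\<Sum>t'<k. Z t' * real_of_int (W (g t) (g t'))))"
  proof (rule sum.cong[OF refl])
    fix t assume "t \<in> {..<k}"
    show "Y t * (\<Sum>j<n. ext g k Z j * real_of_int (W (g t) j)) = Y t * (\<Sum>t'<k. Z t' * real_of_int (W (g t) (g t')))"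
      using ext_sum[OF inj gn, of Z "\<lambda>j. real_of_int (W (g t) j)"] by simp
  qed
  also have "\<dots> = (\<Sum>t<k. \<Sum>t'<k. Y t * real_of_int (W (g t) (g t')) * Z t')"
    by (simp add: sum_distrib_left mult_ac)
  finally show ?thesis .
qed

lemma ext_sq:
  assumes inj: "inj_on g {..<k}" and gn: "g ` {..<k} \<subseteq> {..<n}"
  shows "(\<Sum>i<n. (ext g k Y i)^2) = (\<Sum>t<k. (Y t)^2)"
proof -
  have "(\<Sum>i<n. (ext g k Y i)^2) = (\<Sum>i<n. ext g k Y i * ext g k Y i)" by (simp add: power2_eq_square)
  also have "\<dots> = (\<Sum>t<k. Y t * ext g k Y (g t))" by (rule ext_sum[OF inj gn])
  also have "\<dots> = (\<Sum>t<k. (Y t)^2)"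
    by (intro sum.cong refl) (simp add: ext_def inv_into_f_f[OF inj] power2_eq_square)
  finally show ?thesis .
qed

lemma suc_mod: "(t::nat) < k \<Longrightarrow> (t+1) mod k = (if t + 1 = k then 0 else t + 1)"
  by (cases "t + 1 = k") auto

lemma cyc_sum3:
  fixes F :: "nat \<Rightarrow> nat \<Rightarrow> real"
  assumes k3: "k \<ge> 3"
    and z: "\<And>t t'. t < k \<Longrightarrow> t' < k \<Longrightarrow> t \<noteq> t' \<Longrightarrow> t' \<noteq> (t+1) mod k \<Longrightarrow> t \<noteq> (t'+1) mod k \<Longrightarrow> F t t' = 0"
  shows "(\<Sum>t<k. \<Sum>t'<k. F t t') = (\<Sum>t<k. F t t + F t ((t+1) mod k) + F ((t+1) mod k) t)"
proof -
  define pr where "pr t = (if t = 0 then k - 1 else t - 1)" for t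
  have nxe: "(t+1) mod k = (if t+1 = k then 0 else t+1)" if "t < k" for t using suc_mod[OF that] .
  have inner: "(\<Sum>t'<k. F t t') = F t t + F t ((t+1) mod k) + F t (pr t)" if t: "t < k" for t
  proof -
    have d1: "(t+1) mod k \<noteq> t" and d2: "pr t \<noteq> t" and d3: "(t+1) mod k \<noteq> pr t"
      using t k3 unfolding pr_def nxe[OF t] by auto
    have lt: "(t+1) mod k < k" "pr t < k" using t k3 unfolding pr_def by auto
    have "(\<Sum>t'<k. F t t') = (\<Sum>t'\<in>{t, (t+1) mod k, pr t}. F t t')"
    proof (rule sum.mono_neutral_right)
      show "{t, (t+1) mod k, pr t} \<subseteq> {..<k}" using t lt by auto
      show "\<forall>i\<in>{..<k} - {t, (t+1) mod k, pr t}. F t i = 0"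
      proof
        fix i assume i: "i \<in> {..<k} - {t, (t+1) mod k, pr t}"
        then have ik: "i < k" by simp
        have "t \<noteq> (i+1) mod k"
          using i t unfolding pr_def nxe[OF ik] by (auto split: if_splits)
        then show "F t i = 0" using i t by (intro z) auto
      qed
    qed simp
    also have "\<dots> = F t t + F t ((t+1) mod k) + F t (pr t)"
      using d1 d2 d3 by (simp add: add.assoc)
    finally show ?thesis .
  qed
  have "(\<Sum>t<k. \<Sum>t'<k. F t t') = (\<Sum>t<k. F t t + F t ((t+1) mod k) + F t (pr t))"
    by (intro sum.cong refl inner) simp
  also have "\<dots> = (\<Sum>t<k. F t t + F t ((t+1) mod k)) + (\<Sum>t<k. F t (pr t))"
    by (simp add: sum.distrib)
  also have "(\<Sum>t<k. F t (pr t)) = (\<Sum>t<k. F ((t+1) mod k) (pr ((t+1) mod k)))"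
    by (rule sum_rot1[symmetric]) (use k3 in simp)
  also have "\<dots> = (\<Sum>t<k. F ((t+1) mod k) t)"
  proof (intro sum.cong refl)
    fix t assume "t \<in> {..<k}"
    then have tk: "t < k" by simp
    then have "pr ((t+1) mod k) = t" unfolding pr_def nxe[OF tk] using k3 by auto
    then show "F ((t+1) mod k) (pr ((t+1) mod k)) = F ((t+1) mod k) t" by simp
  qed
  also have "(\<Sum>t<k. F t t + F t ((t+1) mod k)) + (\<Sum>t<k. F ((t+1) mod k) t)
      = (\<Sum>t<k. F t t + F t ((t+1) mod k) + F ((t+1) mod k) t)"
    by (simp add: sum.distrib)
  finally show ?thesis .
qed

lemma chordless_contra:
  fixes pp qq :: "nat \<Rightarrow> nat \<Rightarrow> int" and g :: "nat \<Rightarrow> nat"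
  assumes k3: "k \<ge> 3" and inj: "inj_on g {..<k}" and gn: "g ` {..<k} \<subseteq> {..<n}"
    and bnd: "\<And>y z. \<bar>Bf n pp y y + Bf n pp z z + 2 * sqrt 2 * Bf n qq y z\<bar>
                 \<le> 2 * ((\<Sum>i<n. (y i)^2) + (\<Sum>i<n. (z i)^2))"
    and psym: "\<And>i j. i < n \<Longrightarrow> j < n \<Longrightarrow> pp i j = pp j i"
    and qsym: "\<And>i j. i < n \<Longrightarrow> j < n \<Longrightarrow> qq i j = qq j i"
    and qdiag: "\<And>i. i < n \<Longrightarrow> qq i i = 0"
    and chordless: "\<And>t t'. t < k \<Longrightarrow> t' < k \<Longrightarrow> t \<noteq> t' \<Longrightarrow> t' \<noteq> (t+1) mod k \<Longrightarrow> t \<noteq> (t'+1) mod k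
                      \<Longrightarrow> pp (g t) (g t') = 0 \<and> qq (g t) (g t') = 0"
    and edge: "\<And>t. t < k \<Longrightarrow> (pp (g t) (g ((t+1) mod k)) \<noteq> 0 \<and> qq (g t) (g ((t+1) mod k)) = 0)
                 \<or> (pp (g t) (g ((t+1) mod k)) = 0 \<and> \<bar>qq (g t) (g ((t+1) mod k))\<bar> = 1)"
    and oddc: "odd (\<Sum>t<k. (if qq (g t) (g ((t+1) mod k)) \<noteq> 0 then 1 else 0::nat))"
  shows False
proof -
  define nx where "nx t = (t+1) mod k" for t
  have nxe: "nx t = (if t+1 = k then 0 else Suc t)" if "t < k" for t
    using suc_mod[OF that] unfolding nx_def by simp
  have nxk: "nx t < k" if "t < k" for t using that k3 unfolding nx_def by simp
  have gk: "g t < n" if "t < k" for t using gn that by auto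
  define pe where "pe t = pp (g t) (g (nx t))" for t
  define qe where "qe t = qq (g t) (g (nx t))" for t
  define b where "b t = (qe t \<noteq> 0)" for t
  have edge': "\<And>t. t < k \<Longrightarrow> (pe t \<noteq> 0 \<and> qe t = 0) \<or> (pe t = 0 \<and> \<bar>qe t\<bar> = 1)"
    using edge unfolding pe_def qe_def nx_def by blast
  define sg :: "nat \<Rightarrow> real" where "sg t = (if b t then of_int (sgn (qe t)) else of_int (sgn (pe t)))" for t
  have sg2: "sg t * sg t = 1" if "t < k" for t
    using edge'[OF that] unfolding sg_def b_def
    by (auto simp: sgn_if)
  have sgp: "sg t * of_int (pe t) = of_int \<bar>pe t\<bar>" if "t < k" "\<not> b t" for t
    using that unfolding sg_def by (auto simp: sgn_if)
  have sgq: "sg t * of_int (qe t) = 1" if "t < k" "b t" for t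
    using that edge'[OF that(1)] unfolding sg_def b_def by (auto simp: sgn_if)
  have pe0: "pe t = 0" if "t < k" "b t" for t using that edge'[OF that(1)] unfolding b_def by auto
  have qe0: "qe t = 0" if "t < k" "\<not> b t" for t using that unfolding b_def by auto
  define C where "C = (\<Sum>t<k. real_of_int (pp (g t) (g t)))"
  define \<tau> :: real where "\<tau> = (if C \<ge> 0 then 1 else -1)"
  have tau2: "\<tau> * \<tau> = 1" unfolding \<tau>_def by simp
  define cb where "cb t = (\<Sum>r<t. (if b r then 1 else 0::nat))" for t
  have cbS: "cb (Suc t) = cb t + (if b t then 1 else 0)" for t unfolding cb_def by simp
  have cbk: "odd (cb k)" using oddc unfolding cb_def b_def qe_def nx_def by simp
  define \<sigma> where "\<sigma> t = \<tau>^t * (\<Prod>r<t. sg r)" for t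
  have \<sigma>S: "\<sigma> (Suc t) = \<sigma> t * (\<tau> * sg t)" for t unfolding \<sigma>_def by (simp add: mult_ac)
  have \<sigma>2: "\<sigma> t * \<sigma> t = 1" if "t \<le> k" for t
    using that
  proof (induct t)
    case 0 then show ?case by (simp add: \<sigma>_def)
  next
    case (Suc t)
    then have "\<sigma> t * \<sigma> t = 1" "sg t * sg t = 1" using sg2 by auto
    then show ?case unfolding \<sigma>S using tau2
      by (metis (no_types, lifting) mult.commute mult.left_commute mult_1)
  qed
  define \<Omega> where "\<Omega> = \<sigma> k"
  have \<Omega>2: "\<Omega> * \<Omega> = 1" unfolding \<Omega>_def by (rule \<sigma>2) simp
  define F where "F t = (if even (cb t) then 1 else \<Omega>)" for t
  define G where "G t = (if even (cb t) then \<Omega> else 1)" for t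
  define Y where "Y t = \<sigma> t * F t" for t
  define Z where "Z t = \<sigma> t * G t" for t
  have F2: "F t * F t = 1" "G t * G t = 1" for t unfolding F_def G_def using \<Omega>2 by auto
  have Y2: "Y t * Y t = 1" "Z t * Z t = 1" if "t \<le> k" for t
    using \<sigma>2[OF that] F2[of t] unfolding Y_def Z_def
    by (metis mult.commute mult.left_commute mult_1)+
  have cons1: "Y t * Y (Suc t) = \<tau> * sg t \<and> Z t * Z (Suc t) = \<tau> * sg t" if "t < k" "\<not> b t" for t
  proof -
    have "F (Suc t) = F t" "G (Suc t) = G t" unfolding F_def G_def cbS using that by auto
    then show ?thesis unfolding Y_def Z_def \<sigma>S
      using \<sigma>2[of t] F2[of t] that
      by (metis (no_types, lifting) less_imp_le mult.commute mult.left_commute mult_1)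
  qed
  have cons2: "Y t * Z (Suc t) = \<tau> * sg t \<and> Z t * Y (Suc t) = \<tau> * sg t" if "t < k" "b t" for t
  proof -
    have "G (Suc t) = F t" "F (Suc t) = G t" unfolding F_def G_def cbS using that by auto
    then show ?thesis unfolding Y_def Z_def \<sigma>S
      using \<sigma>2[of t] F2[of t] that
      by (metis (no_types, lifting) less_imp_le mult.commute mult.left_commute mult_1)
  qed
  have wrap: "Y k = Y 0" "Z k = Z 0"
    using cbk \<Omega>2 unfolding Y_def Z_def F_def G_def \<Omega>_def by (auto simp: \<sigma>_def cb_def)
  have nxY: "Y (nx t) = Y (Suc t)" "Z (nx t) = Z (Suc t)" if "t < k" for t
    using nxe[OF that] wrap by auto
  define pw where "pw t = (if b t then 0 else real_of_int \<bar>pe t\<bar>)" for t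
  define bw where "bw t = (if b t then 1 else 0::real)" for t
  have BP: "Bf n pp (ext g k Y) (ext g k Y) = C + 2 * \<tau> * (\<Sum>t<k. pw t)"
   and BPz: "Bf n pp (ext g k Z) (ext g k Z) = C + 2 * \<tau> * (\<Sum>t<k. pw t)"
  proof -
    have gen: "Bf n pp (ext g k V) (ext g k V) = C + 2 * \<tau> * (\<Sum>t<k. pw t)"
      if V2: "\<And>t. t \<le> k \<Longrightarrow> V t * V t = 1"
      and Vc: "\<And>t. t < k \<Longrightarrow> \<not> b t \<Longrightarrow> V t * V (Suc t) = \<tau> * sg t"
      and Vn: "\<And>t. t < k \<Longrightarrow> V (nx t) = V (Suc t)" for V
    proof -
      have "Bf n pp (ext g k V) (ext g k V) = (\<Sum>t<k. \<Sum>t'<k. V t * real_of_int (pp (g t) (g t')) * V t')"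
        by (rule Bf_ext[OF inj gn])
      also have "\<dots> = (\<Sum>t<k. V t * real_of_int (pp (g t) (g t)) * V t
                        + V t * real_of_int (pp (g t) (g ((t+1) mod k))) * V ((t+1) mod k)
                        + V ((t+1) mod k) * real_of_int (pp (g ((t+1) mod k)) (g t)) * V t)"
        by (rule cyc_sum3[OF k3]) (use chordless in simp)
      also have "\<dots> = (\<Sum>t<k. real_of_int (pp (g t) (g t)) + 2 * (\<tau> * pw t))"
      proof (rule sum.cong[OF refl])
        fix t assume "t \<in> {..<k}"
        then have t: "t < k" by simp
        have sy: "pp (g (nx t)) (g t) = pe t" unfolding pe_def using psym gk t nxk by auto
        have d: "V t * real_of_int (pp (g t) (g t)) * V t = real_of_int (pp (g t) (g t))"
          using V2[of t] t by (simp add: mult_ac)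
        have e: "V t * real_of_int (pe t) * V (nx t) = \<tau> * pw t"
        proof (cases "b t")
          case True then show ?thesis using pe0[OF t] unfolding pw_def by simp
        next
          case False
          have "V t * real_of_int (pe t) * V (nx t) = (V t * V (Suc t)) * real_of_int (pe t)"
            using Vn[OF t] by (simp add: mult_ac)
          also have "\<dots> = \<tau> * (sg t * real_of_int (pe t))" using Vc[OF t False] by (simp add: mult_ac)
          finally show ?thesis using sgp[OF t False] False unfolding pw_def by simp
        qed
        show "V t * real_of_int (pp (g t) (g t)) * V t
                        + V t * real_of_int (pp (g t) (g ((t+1) mod k))) * V ((t+1) mod k)
                        + V ((t+1) mod k) * real_of_int (pp (g ((t+1) mod k)) (g t)) * V t
              = real_of_int (pp (g t) (g t)) + 2 * (\<tau> * pw t)"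
          using d e sy unfolding nx_def[symmetric] pe_def[symmetric] by (simp add: mult_ac)
      qed
      also have "\<dots> = C + 2 * \<tau> * (\<Sum>t<k. pw t)"
        unfolding C_def by (simp add: sum.distrib sum_distrib_left mult.assoc)
      finally show ?thesis .
    qed
    show "Bf n pp (ext g k Y) (ext g k Y) = C + 2 * \<tau> * (\<Sum>t<k. pw t)"
      by (rule gen) (use Y2 cons1 nxY in auto)
    show "Bf n pp (ext g k Z) (ext g k Z) = C + 2 * \<tau> * (\<Sum>t<k. pw t)"
      by (rule gen) (use Y2 cons1 nxY in auto)
  qed
  have BQ: "Bf n qq (ext g k Y) (ext g k Z) = 2 * \<tau> * (\<Sum>t<k. bw t)"
  proof -
    have "Bf n qq (ext g k Y) (ext g k Z) = (\<Sum>t<k. \<Sum>t'<k. Y t * real_of_int (qq (g t) (g t')) * Z t')"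
      by (rule Bf_ext[OF inj gn])
    also have "\<dots> = (\<Sum>t<k. Y t * real_of_int (qq (g t) (g t)) * Z t
                      + Y t * real_of_int (qq (g t) (g ((t+1) mod k))) * Z ((t+1) mod k)
                      + Y ((t+1) mod k) * real_of_int (qq (g ((t+1) mod k)) (g t)) * Z t)"
      by (rule cyc_sum3[OF k3]) (use chordless in simp)
    also have "\<dots> = (\<Sum>t<k. 2 * (\<tau> * bw t))"
    proof (rule sum.cong[OF refl])
      fix t assume "t \<in> {..<k}"
      then have t: "t < k" by simp
      have sy: "qq (g (nx t)) (g t) = qe t" unfolding qe_def using qsym gk t nxk by auto
      have d: "qq (g t) (g t) = 0" using qdiag gk t by auto
      have e: "Y t * real_of_int (qe t) * Z (nx t) + Y (nx t) * real_of_int (qe t) * Z t = 2 * (\<tau> * bw t)"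
      proof (cases "b t")
        case False then show ?thesis using qe0[OF t] unfolding bw_def by simp
      next
        case True
        have "Y t * real_of_int (qe t) * Z (nx t) = (Y t * Z (Suc t)) * real_of_int (qe t)"
          using nxY[OF t] by (simp add: mult_ac)
        also have "\<dots> = \<tau>" using cons2[OF t True] sgq[OF t True] by (simp add: mult_ac)
        finally have 1: "Y t * real_of_int (qe t) * Z (nx t) = \<tau>" .
        have "Y (nx t) * real_of_int (qe t) * Z t = (Z t * Y (Suc t)) * real_of_int (qe t)"
          using nxY[OF t] by (simp add: mult_ac)
        also have "\<dots> = \<tau>" using cons2[OF t True] sgq[OF t True] by (simp add: mult_ac)
        finally have 2: "Y (nx t) * real_of_int (qe t) * Z t = \<tau>" .
        show ?thesis using 1 2 True unfolding bw_def by simp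
      qed
      show "Y t * real_of_int (qq (g t) (g t)) * Z t
                      + Y t * real_of_int (qq (g t) (g ((t+1) mod k))) * Z ((t+1) mod k)
                      + Y ((t+1) mod k) * real_of_int (qq (g ((t+1) mod k)) (g t)) * Z t
            = 2 * (\<tau> * bw t)"
        using d e sy unfolding nx_def[symmetric] qe_def[symmetric] by simp
    qed
    also have "\<dots> = 2 * \<tau> * (\<Sum>t<k. bw t)" by (simp add: sum_distrib_left mult.assoc)
    finally show ?thesis .
  qed
  have NY: "(\<Sum>i<n. (ext g k Y i)^2) = real k"
  proof -
    have "(\<Sum>i<n. (ext g k Y i)^2) = (\<Sum>t<k. (Y t)^2)" by (rule ext_sq[OF inj gn])
    also have "\<dots> = (\<Sum>t<k. 1)" using Y2 by (intro sum.cong refl) (simp add: power2_eq_square)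
    finally show ?thesis by simp
  qed
  have NZ: "(\<Sum>i<n. (ext g k Z i)^2) = real k"
  proof -
    have "(\<Sum>i<n. (ext g k Z i)^2) = (\<Sum>t<k. (Z t)^2)" by (rule ext_sq[OF inj gn])
    also have "\<dots> = (\<Sum>t<k. 1)" using Y2 by (intro sum.cong refl) (simp add: power2_eq_square)
    finally show ?thesis by simp
  qed
  define w where "w t = pw t + sqrt 2 * bw t" for t
  have T: "\<bar>2 * C + 4 * \<tau> * (\<Sum>t<k. w t)\<bar> \<le> 4 * real k"
  proof -
    have "2 * C + 4 * \<tau> * (\<Sum>t<k. w t)
        = Bf n pp (ext g k Y) (ext g k Y) + Bf n pp (ext g k Z) (ext g k Z) + 2 * sqrt 2 * Bf n qq (ext g k Y) (ext g k Z)"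
    proof -
      have sw: "(\<Sum>t<k. w t) = (\<Sum>t<k. pw t) + sqrt 2 * (\<Sum>t<k. bw t)"
        unfolding w_def by (simp add: sum.distrib sum_distrib_left)
      show ?thesis unfolding BP BPz BQ sw by (simp add: algebra_simps)
    qed
    then show ?thesis using bnd[of "ext g k Y" "ext g k Z"] unfolding NY NZ by simp
  qed
  have w1: "w t \<ge> 1" if "t < k" for t
  proof (cases "b t")
    case True then show ?thesis unfolding w_def pw_def bw_def by simp
  next
    case False
    then have "pe t \<noteq> 0" using edge'[OF that] unfolding b_def by auto
    then have "\<bar>pe t\<bar> \<ge> 1" by simp
    then show ?thesis using False unfolding w_def pw_def bw_def by simp
  qed
  obtain t0 where t0: "t0 < k" "b t0"
  proof -
    have "cb k \<noteq> 0" using cbk by (metis even_zero)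
    then show ?thesis using that unfolding cb_def by (metis (mono_tags, lifting) lessThan_iff sum.neutral)
  qed
  have "w t0 > 1" using t0 unfolding w_def pw_def bw_def by simp
  have "(\<Sum>t<k. 1) < (\<Sum>t<k. w t)"
    by (rule sum_strict_mono_ex1) (use w1 t0 \<open>w t0 > 1\<close> in auto)
  then have wk: "(\<Sum>t<k. w t) > real k" by simp
  have "\<tau> * (2 * C + 4 * \<tau> * (\<Sum>t<k. w t)) = 2 * \<bar>C\<bar> + 4 * (\<Sum>t<k. w t)"
    unfolding \<tau>_def by auto
  moreover have "\<tau> * (2 * C + 4 * \<tau> * (\<Sum>t<k. w t)) \<le> \<bar>2 * C + 4 * \<tau> * (\<Sum>t<k. w t)\<bar>"
    unfolding \<tau>_def by auto
  ultimately show False using T wk by simp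
qed

lemma zA_dims[simp]: "dim_row (zsqrt2_mat n p q) = n" "dim_col (zsqrt2_mat n p q) = n"
  "zsqrt2_mat n p q \<in> carrier_mat n n"
  unfolding zsqrt2_mat_def by auto

lemma zC_dims[simp]: "dim_row (zsqrt2_conj_mat n p q) = n" "dim_col (zsqrt2_conj_mat n p q) = n"
  "zsqrt2_conj_mat n p q \<in> carrier_mat n n"
  unfolding zsqrt2_conj_mat_def by auto

lemma zA_ent: "i < n \<Longrightarrow> j < n \<Longrightarrow> zsqrt2_mat n p q $$ (i,j) = of_int (p i j) + sqrt 2 * of_int (q i j)"
  unfolding zsqrt2_mat_def by simp

lemma zC_ent: "i < n \<Longrightarrow> j < n \<Longrightarrow> zsqrt2_conj_mat n p q $$ (i,j) = of_int (p i j) - sqrt 2 * of_int (q i j)"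
  unfolding zsqrt2_conj_mat_def by simp

lemma pq_sym:
  assumes "symmetric_mat (zsqrt2_mat n p q)" "i < n" "j < n"
  shows "p i j = p j i" "q i j = q j i"
proof -
  have "zsqrt2_mat n p q $$ (i,j) = zsqrt2_mat n p q $$ (j,i)"
    using assms unfolding symmetric_mat_def by auto
  then have "real_of_int (p i j) + sqrt 2 * real_of_int (q i j) = real_of_int (p j i) + sqrt 2 * real_of_int (q j i)"
    using assms by (simp add: zA_ent)
  from sqrt2_eq[OF this] show "p i j = p j i" "q i j = q j i" by auto
qed

lemma transA:
  assumes "symmetric_mat (zsqrt2_mat n p q)"
  shows "transpose_mat (zsqrt2_mat n p q) = zsqrt2_mat n p q"
    "transpose_mat (zsqrt2_conj_mat n p q) = zsqrt2_conj_mat n p q"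
  by (rule eq_matI; use pq_sym[OF assms] in \<open>auto simp: zA_ent zC_ent\<close>)+

lemma qfA: "(\<Sum>i<n. \<Sum>j<n. x i * zsqrt2_mat n p q $$ (i,j) * x j) = Bf n p x x + sqrt 2 * Bf n q x x"
  unfolding Bf_def
  by (simp add: zA_ent algebra_simps sum.distrib sum_distrib_left)

lemma qfC: "(\<Sum>i<n. \<Sum>j<n. x i * zsqrt2_conj_mat n p q $$ (i,j) * x j) = Bf n p x x - sqrt 2 * Bf n q x x"
  unfolding Bf_def
  by (simp add: zC_ent algebra_simps sum.distrib sum_distrib_left sum_subtractf)

lemma Bf_pm:
  "Bf n W (\<lambda>i. y i + z i) (\<lambda>i. y i + z i) = Bf n W y y + Bf n W y z + Bf n W z y + Bf n W z z"
  "Bf n W (\<lambda>i. y i - z i) (\<lambda>i. y i - z i) = Bf n W y y - Bf n W y z - Bf n W z y + Bf n W z z"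
  unfolding Bf_def by (simp_all add: algebra_simps sum.distrib sum_subtractf)

lemma Bf_swap:
  assumes "\<And>i j. i < n \<Longrightarrow> j < n \<Longrightarrow> W i j = W j i"
  shows "Bf n W z y = Bf n W y z"
proof -
  have "Bf n W z y = (\<Sum>j<n. \<Sum>i<n. z i * real_of_int (W i j) * y j)"
    unfolding Bf_def by (rule sum.swap)
  also have "\<dots> = Bf n W y z" unfolding Bf_def
    by (intro sum.cong refl) (simp add: assms mult_ac)
  finally show ?thesis .
qed

lemma cover_bound:
  assumes sym: "symmetric_mat (zsqrt2_mat n p q)"
    and eig: "eigs_in_interval (zsqrt2_mat n p q)"
    and eigc: "eigs_in_interval (zsqrt2_conj_mat n p q)"
  shows "\<bar>Bf n p y y + Bf n p z z + 2 * sqrt 2 * Bf n q y z\<bar> \<le> 2 * ((\<Sum>i<n. (y i)^2) + (\<Sum>i<n. (z i)^2))"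
proof -
  define u where "u i = y i + z i" for i
  define w where "w i = y i - z i" for i
  have bA: "\<bar>Bf n p u u + sqrt 2 * Bf n q u u\<bar> \<le> 2 * (\<Sum>i<n. (u i)^2)"
    using qf_bound[OF zA_dims(3) transA(1)[OF sym] eig, of u] unfolding qfA .
  have bC: "\<bar>Bf n p w w - sqrt 2 * Bf n q w w\<bar> \<le> 2 * (\<Sum>i<n. (w i)^2)"
    using qf_bound[OF zC_dims(3) transA(2)[OF sym] eigc, of w] unfolding qfC .
  have ps: "Bf n p z y = Bf n p y z" by (rule Bf_swap) (use pq_sym[OF sym] in auto)
  have qs: "Bf n q z y = Bf n q y z" by (rule Bf_swap) (use pq_sym[OF sym] in auto)
  have e1: "(Bf n p u u + sqrt 2 * Bf n q u u) + (Bf n p w w - sqrt 2 * Bf n q w w)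
      = 2 * (Bf n p y y + Bf n p z z + 2 * sqrt 2 * Bf n q y z)"
    unfolding u_def w_def Bf_pm ps qs by (simp add: algebra_simps)
  have e2: "(\<Sum>i<n. (u i)^2) + (\<Sum>i<n. (w i)^2) = 2 * ((\<Sum>i<n. (y i)^2) + (\<Sum>i<n. (z i)^2))"
  proof -
    have "(\<Sum>i<n. (u i)^2) + (\<Sum>i<n. (w i)^2) = (\<Sum>i<n. (u i)^2 + (w i)^2)" by (simp add: sum.distrib)
    also have "\<dots> = (\<Sum>i<n. 2 * ((y i)^2 + (z i)^2))"
      by (intro sum.cong refl) (simp add: u_def w_def power2_eq_square algebra_simps)
    also have "\<dots> = 2 * ((\<Sum>i<n. (y i)^2) + (\<Sum>i<n. (z i)^2))" by (simp add: sum.distrib sum_distrib_left)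
    finally show ?thesis .
  qed
  define T where "T = Bf n p y y + Bf n p z z + 2 * sqrt 2 * Bf n q y z"
  define YZ where "YZ = (\<Sum>i<n. (y i)^2) + (\<Sum>i<n. (z i)^2)"
  have "\<bar>2 * T\<bar> \<le> 2 * ((\<Sum>i<n. (u i)^2) + (\<Sum>i<n. (w i)^2))"
    unfolding T_def e1[symmetric]
    using bA bC abs_triangle_ineq[of "Bf n p u u + sqrt 2 * Bf n q u u" "Bf n p w w - sqrt 2 * Bf n q w w"]
    by (smt (verit))
  also have "\<dots> = 2 * (2 * YZ)" unfolding YZ_def e2 ..
  finally have "2 * \<bar>T\<bar> \<le> 2 * (2 * YZ)" by (simp add: abs_mult)
  then show ?thesis unfolding T_def YZ_def by simp
qed

lemma nonmixed:
  fixes x y :: int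
  assumes a: "\<bar>real_of_int x + sqrt 2 * real_of_int y\<bar> \<le> 2"
    and b: "\<bar>real_of_int x - sqrt 2 * real_of_int y\<bar> \<le> 2"
  shows "(x = 0 \<or> y = 0) \<and> \<bar>y\<bar> \<le> 1"
proof -
  have s1: "sqrt 2 > 1.4" by (rule real_less_rsqrt) (simp add: power2_eq_square)
  have "\<bar>2 * sqrt 2 * real_of_int y\<bar> \<le> 4" using a b by linarith
  then have "sqrt 2 * \<bar>real_of_int y\<bar> \<le> 2" by (simp add: abs_mult mult.commute)
  then have "1.4 * \<bar>real_of_int y\<bar> \<le> 2" using s1
    by (smt (verit) abs_ge_zero mult_right_mono)
  then have y1: "\<bar>y\<bar> \<le> 1" by linarith
  have "x = 0 \<or> y = 0"
  proof (rule ccontr)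
    assume "\<not> (x = 0 \<or> y = 0)"
    then have "y = 1 \<or> y = -1" "x \<ge> 1 \<or> x \<le> -1" using y1 by auto
    then show False using a b s1 by auto
  qed
  with y1 show ?thesis by simp
qed

lemma entry_bounds:
  assumes sym: "symmetric_mat (zsqrt2_mat n p q)"
    and eig: "eigs_in_interval (zsqrt2_mat n p q)"
    and eigc: "eigs_in_interval (zsqrt2_conj_mat n p q)"
    and qd: "\<And>i. i < n \<Longrightarrow> q i i = 0"
    and ij: "i < n" "j < n" "i \<noteq> j"
  shows "(p i j = 0 \<or> q i j = 0) \<and> \<bar>q i j\<bar> \<le> 1"
proof -
  define g where "g t = (if t = 0 then i else j)" for t :: nat
  have inj: "inj_on g {..<2}" unfolding g_def inj_on_def using ij by auto
  have gn: "g ` {..<2} \<subseteq> {..<n}" unfolding g_def using ij by auto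
  have L2: "{..<2::nat} = {0,1}" by auto
  have key: "\<bar>real_of_int (p i i) + real_of_int (p j j) + 2 * s * (real_of_int (p i j) + c * sqrt 2 * real_of_int (q i j))\<bar> \<le> 4"
    if s: "s * s = 1" and c: "c = 1 \<or> c = -1" for s c :: real
  proof -
    define Y where "Y t = (if t = 0 then 1 else s)" for t :: nat
    define x where "x = ext g 2 Y"
    have N: "(\<Sum>i<n. (x i)^2) = 2"
      unfolding x_def ext_sq[OF inj gn] L2 Y_def using s by (simp add: power2_eq_square)
    have BW: "Bf n W x x = real_of_int (W i i) + s * real_of_int (W i j) + s * real_of_int (W j i) + s * s * real_of_int (W j j)" for W
      unfolding x_def Bf_ext[OF inj gn] L2 Y_def g_def using ij by (simp add: algebra_simps)
    have ps: "p j i = p i j" "q j i = q i j" using pq_sym[OF sym ij(2) ij(1)] by auto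
    show ?thesis
    proof (cases "c = 1")
      case True
      have "\<bar>Bf n p x x + sqrt 2 * Bf n q x x\<bar> \<le> 2 * 2"
        using qf_bound[OF zA_dims(3) transA(1)[OF sym] eig, of x] unfolding qfA N .
      then show ?thesis unfolding BW ps using s qd ij True by (simp add: algebra_simps)
    next
      case False
      then have c': "c = -1" using c by simp
      have "\<bar>Bf n p x x - sqrt 2 * Bf n q x x\<bar> \<le> 2 * 2"
        using qf_bound[OF zC_dims(3) transA(2)[OF sym] eigc, of x] unfolding qfC N .
      then show ?thesis unfolding BW ps using s qd ij c' by (simp add: algebra_simps)
    qed
  qed
  have "\<bar>real_of_int (p i j) + sqrt 2 * real_of_int (q i j)\<bar> \<le> 2"
    using key[of 1 1] key[of "-1" 1] by (simp add: abs_le_iff)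
  moreover have "\<bar>real_of_int (p i j) - sqrt 2 * real_of_int (q i j)\<bar> \<le> 2"
    using key[of 1 "-1"] key[of "-1" "-1"] by (simp add: abs_le_iff)
  ultimately show ?thesis by (rule nonmixed)
qed

definition fA :: "real mat \<Rightarrow> nat \<Rightarrow> nat \<Rightarrow> nat" where
  "fA A u v = (if adj A u v \<and> \<bar>A $$ (u,v)\<bar> = sqrt 2 then 1 else 0)"

lemma adj_sym:
  assumes "symmetric_mat A" "adj A x y" shows "adj A y x"
  using assms unfolding adj_def symmetric_mat_def by auto

lemma fA_sym:
  assumes "symmetric_mat A" shows "fA A x y = fA A y x"
proof -
  have "adj A x y \<longleftrightarrow> adj A y x" using adj_sym[OF assms] by blast
  moreover have "adj A x y \<Longrightarrow> A $$ (x,y) = A $$ (y,x)"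
    using assms unfolding adj_def symmetric_mat_def by auto
  ultimately show ?thesis unfolding fA_def by auto
qed

lemma abs_int_ne_sqrt2: "\<bar>real_of_int p\<bar> \<noteq> sqrt 2"
proof
  assume "\<bar>real_of_int p\<bar> = sqrt 2"
  then have "(real_of_int p)^2 = 2" by (metis power2_abs real_sqrt_pow2 zero_le_numeral)
  then have "p^2 = 2 * 1^2" by (metis of_int_eq_iff of_int_numeral of_int_power power_one mult_1_right)
  from two_sq_int_aux[OF this] show False by simp
qed

lemma part1_walk:
  fixes n :: nat and p q :: "nat \<Rightarrow> nat \<Rightarrow> int"
  defines "A \<equiv> zsqrt2_mat n p q"
  assumes sym: "symmetric_mat A"
    and qd: "\<And>i. i < n \<Longrightarrow> q i i = 0"
    and eig: "eigs_in_interval A"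
    and eigc: "eigs_in_interval (zsqrt2_conj_mat n p q)"
  shows "cw (adj A) k g \<Longrightarrow> even (ccnt (fA A) k g)"
proof (rule closed_walk_even)
  show "\<And>x y. adj A x y \<Longrightarrow> adj A y x" by (rule adj_sym[OF sym])
  show "\<And>x. \<not> adj A x x" unfolding adj_def by simp
  show "\<And>x y. fA A x y = fA A y x" by (rule fA_sym[OF sym])
next
  fix k g
  assume k3: "3 \<le> k" and inj: "inj_on g {..<k}" and c: "cw (adj A) k g"
    and chl: "\<forall>t<k. \<forall>t'<k. adj A (g t) (g t') \<longrightarrow> t' = (t + 1) mod k \<or> t = (t' + 1) mod k"
  have ed: "\<And>t. t < k \<Longrightarrow> adj A (g t) (g ((t+1) mod k))" using c unfolding cw_def by auto
  have gn: "g ` {..<k} \<subseteq> {..<n}"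
    using ed unfolding adj_def A_def by auto
  have gk: "g t < n" if "t < k" for t using gn that by auto
  have ent: "A $$ (i,j) = of_int (p i j) + sqrt 2 * of_int (q i j)" if "i < n" "j < n" for i j
    unfolding A_def using that by (rule zA_ent)
  have eb: "(p i j = 0 \<or> q i j = 0) \<and> \<bar>q i j\<bar> \<le> 1" if "i < n" "j < n" "i \<noteq> j" for i j
    by (rule entry_bounds[OF sym[unfolded A_def] eig[unfolded A_def] eigc qd that])
  have edge: "(p (g t) (g ((t+1) mod k)) \<noteq> 0 \<and> q (g t) (g ((t+1) mod k)) = 0)
        \<or> (p (g t) (g ((t+1) mod k)) = 0 \<and> \<bar>q (g t) (g ((t+1) mod k))\<bar> = 1)" if t: "t < k" for t
  proof -
    let ?u = "g t" and ?v = "g ((t+1) mod k)"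
    have a: "adj A ?u ?v" by (rule ed[OF t])
    then have uv: "?u < n" "?v < n" "?u \<noteq> ?v" "A $$ (?u,?v) \<noteq> 0" unfolding adj_def A_def by auto
    then have "\<not> (p ?u ?v = 0 \<and> q ?u ?v = 0)" using ent[OF uv(1,2)] by auto
    with eb[OF uv(1-3)] show ?thesis by auto
  qed
  have fe: "fA A (g t) (g ((t+1) mod k)) = (if q (g t) (g ((t+1) mod k)) \<noteq> 0 then 1 else 0)" if t: "t < k" for t
  proof -
    let ?u = "g t" and ?v = "g ((t+1) mod k)"
    have a: "adj A ?u ?v" by (rule ed[OF t])
    then have uv: "?u < n" "?v < n" unfolding adj_def A_def by auto
    show ?thesis
    proof (cases "q ?u ?v = 0")
      case True
      then show ?thesis unfolding fA_def using a ent[OF uv] abs_int_ne_sqrt2[of "p ?u ?v"] by simp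
    next
      case False
      then have "p ?u ?v = 0" "\<bar>q ?u ?v\<bar> = 1" using edge[OF t] by auto
      then have "\<bar>A $$ (?u,?v)\<bar> = sqrt 2" using ent[OF uv]
        by (simp add: abs_mult)
      then show ?thesis unfolding fA_def using a False by simp
    qed
  qed
  show "even (ccnt (fA A) k g)"
  proof (rule ccontr)
    assume od: "\<not> even (ccnt (fA A) k g)"
    have "ccnt (fA A) k g = (\<Sum>t<k. (if q (g t) (g ((t+1) mod k)) \<noteq> 0 then 1 else 0::nat))"
      unfolding ccnt_def by (rule sum.cong[OF refl], rule fe, simp)
    with od have oddc: "odd (\<Sum>t<k. (if q (g t) (g ((t+1) mod k)) \<noteq> 0 then 1 else 0::nat))" by simp
    show False
    proof (rule chordless_contra[OF k3 inj gn _ _ _ _ _ edge oddc])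
      show "\<bar>Bf n p y y + Bf n p z z + 2 * sqrt 2 * Bf n q y z\<bar> \<le> 2 * ((\<Sum>i<n. (y i)\<^sup>2) + (\<Sum>i<n. (z i)\<^sup>2))"
        for y z by (rule cover_bound[OF sym[unfolded A_def] eig[unfolded A_def] eigc])
      show "p i j = p j i" if "i < n" "j < n" for i j using pq_sym[OF sym[unfolded A_def] that] by simp
      show "q i j = q j i" if "i < n" "j < n" for i j using pq_sym[OF sym[unfolded A_def] that] by simp
      show "q i i = 0" if "i < n" for i using qd that .
      fix t t' assume tt: "t < k" "t' < k" "t \<noteq> t'" "t' \<noteq> (t+1) mod k" "t \<noteq> (t'+1) mod k"
      then have na: "\<not> adj A (g t) (g t')" using chl by blast
      have "g t \<noteq> g t'" using inj tt unfolding inj_on_def by auto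
      then have "A $$ (g t, g t') = 0" using na gk tt unfolding adj_def A_def by auto
      then show "p (g t) (g t') = 0 \<and> q (g t) (g t') = 0"
        using sqrt2_lin_indep ent[OF gk[OF tt(1)] gk[OF tt(2)]] by auto
    qed (use edge in auto)
  qed
qed

lemma cycle_conv:
  assumes "is_cycle A c"
  shows "cw (adj A) (length c) (nth c)" "num_sqrt2_edges A c = ccnt (fA A) (length c) (nth c)"
proof -
  show "cw (adj A) (length c) (nth c)" using assms unfolding is_cycle_def cw_def by auto
  have "num_sqrt2_edges A c = card {t \<in> {..<length c}. \<bar>A $$ (c ! t, c ! ((t + 1) mod length c))\<bar> = sqrt 2}"
    unfolding num_sqrt2_edges_def by (rule arg_cong[where f=card]) auto
  also have "\<dots> = (\<Sum>t<length c. if \<bar>A $$ (c ! t, c ! ((t + 1) mod length c))\<bar> = sqrt 2 then 1 else 0)"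
    by (simp add: sum.inter_filter[symmetric])
  also have "\<dots> = ccnt (fA A) (length c) (nth c)"
    unfolding ccnt_def fA_def using assms unfolding is_cycle_def by (intro sum.cong refl) auto
  finally show "num_sqrt2_edges A c = ccnt (fA A) (length c) (nth c)" .
qed

definition wlk :: "(nat \<Rightarrow> nat \<Rightarrow> bool) \<Rightarrow> nat \<Rightarrow> (nat \<Rightarrow> nat) \<Rightarrow> bool" where
  "wlk R L h \<longleftrightarrow> (\<forall>t<L. R (h t) (h (Suc t)))"

definition wcn :: "(nat \<Rightarrow> nat \<Rightarrow> nat) \<Rightarrow> nat \<Rightarrow> (nat \<Rightarrow> nat) \<Rightarrow> nat" where
  "wcn f L h = (\<Sum>t<L. f (h t) (h (Suc t)))"

lemma walk_parity:
  fixes R :: "nat \<Rightarrow> nat \<Rightarrow> bool" and f :: "nat \<Rightarrow> nat \<Rightarrow> nat"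
  assumes CW: "\<And>k g. cw R k g \<Longrightarrow> even (ccnt f k g)"
    and symR: "\<And>x y. R x y \<Longrightarrow> R y x" and symf: "\<And>x y. f x y = f y x"
    and w1: "wlk R L1 h1" and w2: "wlk R L2 h2" and s0: "h1 0 = h2 0" and sL: "h1 L1 = h2 L2"
  shows "even (wcn f L1 h1 + wcn f L2 h2)"
proof (cases "L1 + L2 = 0")
  case True then show ?thesis unfolding wcn_def by simp
next
  case False
  define k where "k = L1 + L2"
  define H where "H t = (if t \<le> L1 then h1 t else h2 (k - t))" for t
  have k1: "k \<ge> 1" using False unfolding k_def by arith
  have Hge: "H t = h2 (k - t)" if "t \<ge> L1" "t \<le> k" for t
    using that sL unfolding H_def k_def by auto
  have Hk: "H k = H 0" using Hge[of k] s0 unfolding k_def H_def by auto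
  have Hmod: "H ((t+1) mod k) = H (Suc t)" if "t < k" for t
  proof (cases "t + 1 = k")
    case True then show ?thesis using Hk by simp
  next
    case False then show ?thesis using that by simp
  qed
  have e: "R (H t) (H (Suc t))" if t: "t < k" for t
  proof (cases "t < L1")
    case True
    then show ?thesis using w1 unfolding wlk_def H_def by simp
  next
    case False
    define m where "m = k - Suc t"
    have m: "m < L2" using False t unfolding m_def k_def by simp
    have "R (h2 m) (h2 (Suc m))" using w2 m unfolding wlk_def by simp
    then have "R (h2 (Suc m)) (h2 m)" by (rule symR)
    moreover have "Suc m = k - t" using t unfolding m_def by simp
    moreover have "H t = h2 (k - t)" using Hge[of t] False t by simp
    moreover have "H (Suc t) = h2 m" using Hge[of "Suc t"] False t unfolding m_def by simp
    ultimately show ?thesis by simp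
  qed
  have cwH: "cw R k H" unfolding cw_def using k1 e Hmod by auto
  have "ccnt f k H = (\<Sum>t<k. f (H t) (H (Suc t)))"
    unfolding ccnt_def by (intro sum.cong refl) (simp add: Hmod[simplified])
  also have "\<dots> = (\<Sum>t<L1. f (H t) (H (Suc t))) + (\<Sum>t<L2. f (H (L1 + t)) (H (Suc (L1 + t))))"
    unfolding k_def by (rule sum_lessThan_add')
  also have "(\<Sum>t<L1. f (H t) (H (Suc t))) = wcn f L1 h1"
    unfolding wcn_def H_def by (intro sum.cong refl) auto
  also have "(\<Sum>t<L2. f (H (L1 + t)) (H (Suc (L1 + t)))) = (\<Sum>t<L2. f (h2 (Suc (L2 - Suc t))) (h2 (L2 - Suc t)))"
  proof (intro sum.cong refl)
    fix t assume "t \<in> {..<L2}"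
    then have t: "t < L2" by simp
    have "Suc (L2 - Suc t) = L2 - t" using t by simp
    then have "H (L1 + t) = h2 (Suc (L2 - Suc t))" using Hge[of "L1 + t"] t unfolding k_def by simp
    moreover have "H (Suc (L1 + t)) = h2 (L2 - Suc t)" using Hge[of "Suc (L1 + t)"] t unfolding k_def by simp
    ultimately show "f (H (L1 + t)) (H (Suc (L1 + t))) = f (h2 (Suc (L2 - Suc t))) (h2 (L2 - Suc t))" by simp
  qed
  also have "\<dots> = (\<Sum>m<L2. f (h2 (Suc m)) (h2 m))"
    by (rule sum.nat_diff_reindex[where g="\<lambda>m. f (h2 (Suc m)) (h2 m)"])
  also have "\<dots> = wcn f L2 h2" unfolding wcn_def using symf by simp
  finally show ?thesis using CW[OF cwH] by simp
qed

lemma walk_ext: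
  assumes "wlk R L h" "R (h L) v"
  shows "wlk R (Suc L) (h(Suc L := v))" "wcn f (Suc L) (h(Suc L := v)) = wcn f L h + f (h L) v"
proof -
  show "wlk R (Suc L) (h(Suc L := v))" using assms unfolding wlk_def
    by (auto simp: less_Suc_eq)
  have "wcn f (Suc L) (h(Suc L := v)) = (\<Sum>t<L. f (h t) (h (Suc t))) + f (h L) v"
    unfolding wcn_def by (simp add: sum.lessThan_Suc)
  then show "wcn f (Suc L) (h(Suc L := v)) = wcn f L h + f (h L) v" unfolding wcn_def .
qed

lemma walk_exists:
  assumes "(x, v) \<in> {(a,b). R a b}\<^sup>*"
  shows "\<exists>L h. h 0 = x \<and> h L = v \<and> wlk R L h"
  using assms
proof (induct rule: rtrancl_induct)
  case base
  show ?case by (rule exI[of _ 0], rule exI[of _ "\<lambda>_. x"]) (simp add: wlk_def)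
next
  case (step y z)
  then obtain L h where h: "h 0 = x" "h L = y" "wlk R L h" by blast
  have "R (h L) z" using step h by simp
  note w = walk_ext(1)[OF h(3) this]
  show ?case
  proof (intro exI conjI)
    show "(h(Suc L := z)) 0 = x" using h by simp
    show "(h(Suc L := z)) (Suc L) = z" by simp
    show "wlk R (Suc L) (h(Suc L := z))" by (rule w)
  qed
qed

lemma mult_ent:
  fixes A B :: "real mat"
  assumes "A \<in> carrier_mat n n" "B \<in> carrier_mat n n" "i < n" "j < n"
  shows "(A * B) $$ (i,j) = (\<Sum>l<n. A $$ (i,l) * B $$ (l,j))"
  using assms by (simp add: scalar_prod_def atLeast0LessThan)

lemma diag_conj_entry:
  fixes M :: "real mat"
  assumes M: "M \<in> carrier_mat n n" and ij: "i < n" "j < n"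
  shows "(mat n n (\<lambda>(i,j). if i = j then d i else 0) * M * mat n n (\<lambda>(i,j). if i = j then d i else 0)) $$ (i,j)
       = d i * M $$ (i,j) * d j"
proof -
  define D :: "real mat" where "D = mat n n (\<lambda>(i,j). if i = j then d i else 0)"
  have Dc: "D \<in> carrier_mat n n" unfolding D_def by simp
  have De: "D $$ (a,b) = (if a = b then d a else 0)" if "a < n" "b < n" for a b
    using that unfolding D_def by simp
  have DM: "(D * M) $$ (a,b) = d a * M $$ (a,b)" if "a < n" "b < n" for a b
  proof -
    have "(D * M) $$ (a,b) = (\<Sum>l<n. D $$ (a,l) * M $$ (l,b))" by (rule mult_ent[OF Dc M that])
    also have "\<dots> = (\<Sum>l<n. if l = a then d a * M $$ (l,b) else 0)"
      by (intro sum.cong refl) (use that in \<open>auto simp: De\<close>)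
    also have "\<dots> = d a * M $$ (a,b)" using that by simp
    finally show ?thesis .
  qed
  have DMc: "D * M \<in> carrier_mat n n" using Dc M by simp
  have "(D * M * D) $$ (i,j) = (\<Sum>l<n. (D * M) $$ (i,l) * D $$ (l,j))" by (rule mult_ent[OF DMc Dc ij])
  also have "\<dots> = (\<Sum>l<n. if l = j then (D * M) $$ (i,l) * d j else 0)"
    by (intro sum.cong refl) (use ij in \<open>auto simp: De\<close>)
  also have "\<dots> = (D * M) $$ (i,j) * d j" using ij by simp
  also have "\<dots> = d i * M $$ (i,j) * d j" using DM[OF ij] by simp
  finally show ?thesis unfolding D_def .
qed

lemma diag_sq:
  assumes "\<And>i. i < n \<Longrightarrow> d i * d i = (1::real)"
  shows "mat n n (\<lambda>(i,j). if i = j then d i else 0) * mat n n (\<lambda>(i,j). if i = j then d i else 0) = 1\<^sub>m n"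
proof -
  define D :: "real mat" where "D = mat n n (\<lambda>(i,j). if i = j then d i else 0)"
  have Dc: "D \<in> carrier_mat n n" unfolding D_def by simp
  have De: "D $$ (a,b) = (if a = b then d a else 0)" if "a < n" "b < n" for a b
    using that unfolding D_def by simp
  have "D * D = 1\<^sub>m n"
  proof (rule eq_matI)
    fix i j assume "i < dim_row (1\<^sub>m n :: real mat)" "j < dim_col (1\<^sub>m n :: real mat)"
    then have ij: "i < n" "j < n" by auto
    have "(D * D) $$ (i,j) = (\<Sum>l<n. D $$ (i,l) * D $$ (l,j))" by (rule mult_ent[OF Dc Dc ij])
    also have "\<dots> = (\<Sum>l<n. if l = i then (if i = j then d i * d j else 0) else 0)"
      by (intro sum.cong refl) (use ij in \<open>auto simp: De\<close>)
    also have "\<dots> = (if i = j then d i * d j else 0)" using ij by simp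
    also have "\<dots> = (1\<^sub>m n :: real mat) $$ (i,j)" using ij assms by simp
    finally show "(D * D) $$ (i,j) = (1\<^sub>m n :: real mat) $$ (i,j)" .
  qed (use Dc in auto)
  then show ?thesis unfolding D_def .
qed

lemma zsq_poly:
  fixes c :: "int poly"
  shows "\<exists>a b :: int. poly (map_poly real_of_int c) (sqrt 2) = of_int a + sqrt 2 * of_int b
                    \<and> poly (map_poly real_of_int c) (- sqrt 2) = of_int a - sqrt 2 * of_int b"
proof (induct c)
  case 0 show ?case by (rule exI[of _ 0], rule exI[of _ 0]) simp
next
  case (pCons x c)
  then obtain a b :: int where ab: "poly (map_poly real_of_int c) (sqrt 2) = of_int a + sqrt 2 * of_int b"
    "poly (map_poly real_of_int c) (- sqrt 2) = of_int a - sqrt 2 * of_int b" by blast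
  have m: "map_poly real_of_int (pCons x c) = pCons (real_of_int x) (map_poly real_of_int c)"
    by (rule of_int_hom.map_poly_pCons_hom)
  show ?case
  proof (rule exI[of _ "x + 2 * b"], rule exI[of _ a])
    have s: "sqrt 2 * sqrt 2 = (2::real)" by simp
    show "poly (map_poly real_of_int (pCons x c)) (sqrt 2) = of_int (x + 2 * b) + sqrt 2 * of_int a
        \<and> poly (map_poly real_of_int (pCons x c)) (- sqrt 2) = of_int (x + 2 * b) - sqrt 2 * of_int a"
    proof
      have i1: "real_of_int x + sqrt 2 * (of_int a + sqrt 2 * of_int b) = real_of_int x + sqrt 2 * of_int a + (sqrt 2 * sqrt 2) * of_int b"
        by (simp add: algebra_simps)
      show "poly (map_poly real_of_int (pCons x c)) (sqrt 2) = of_int (x + 2 * b) + sqrt 2 * of_int a"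
        unfolding m poly_pCons ab(1) i1 s by simp
      have i2: "real_of_int x + (- sqrt 2) * (of_int a - sqrt 2 * of_int b) = real_of_int x - sqrt 2 * of_int a + (sqrt 2 * sqrt 2) * of_int b"
        by (simp add: algebra_simps)
      show "poly (map_poly real_of_int (pCons x c)) (- sqrt 2) = of_int (x + 2 * b) - sqrt 2 * of_int a"
        unfolding m poly_pCons ab(2) i2 s by simp
    qed
  qed
qed

lemma eval_hom: "comm_ring_hom (\<lambda>c::int poly. poly (map_poly real_of_int c) r)"
proof -
  interpret m: map_poly_comm_ring_hom "real_of_int" ..
  show ?thesis by unfold_locales (simp_all add: hom_distribs)
qed

theorem lemma12:
  fixes n :: nat and p q :: "nat \<Rightarrow> nat \<Rightarrow> int"
  defines "A \<equiv> zsqrt2_mat n p q"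
  assumes sym: "symmetric_mat A"
    and indec: "indecomposable A"
    and diag_int: "\<And>i. i < n \<Longrightarrow> q i i = 0"
    and eig: "eigs_in_interval A"
    and eig_conj: "eigs_in_interval (zsqrt2_conj_mat n p q)"
  shows "(\<forall>c. is_cycle A c \<longrightarrow> even (num_sqrt2_edges A c))
         \<and> (\<forall>i. poly.coeff (char_poly A) i \<in> \<int>)"
proof -
  define C where "C = zsqrt2_conj_mat n p q"
  have sym': "symmetric_mat (zsqrt2_mat n p q)" using sym unfolding A_def .
  have eig': "eigs_in_interval (zsqrt2_mat n p q)" using eig unfolding A_def .
  have CW: "\<And>k g. cw (adj A) k g \<Longrightarrow> even (ccnt (fA A) k g)"
    unfolding A_def by (rule part1_walk[OF sym' diag_int eig' eig_conj])
  have part1: "\<forall>c. is_cycle A c \<longrightarrow> even (num_sqrt2_edges A c)"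
  proof (intro allI impI)
    fix c assume "is_cycle A c"
    from cycle_conv[OF this] CW show "even (num_sqrt2_edges A c)" by simp
  qed
  have symR: "\<And>x y. adj A x y \<Longrightarrow> adj A y x" by (rule adj_sym[OF sym])
  have symf: "\<And>x y. fA A x y = fA A y x" by (rule fA_sym[OF sym])
  have ent: "A $$ (i,j) = of_int (p i j) + sqrt 2 * of_int (q i j)" if "i < n" "j < n" for i j
    unfolding A_def using that by (rule zA_ent)
  have entC: "C $$ (i,j) = of_int (p i j) - sqrt 2 * of_int (q i j)" if "i < n" "j < n" for i j
    unfolding C_def using that by (rule zC_ent)
  have dimA: "dim_row A = n" unfolding A_def by simp
  define Wv where "Wv v = (\<exists>L h. h 0 = 0 \<and> h L = v \<and> wlk (adj A) L h \<and> even (wcn (fA A) L h))" for v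
  define s :: "nat \<Rightarrow> real" where "s v = (if Wv v then 1 else -1)" for v
  have sval: "s v = (if even (wcn (fA A) L h) then 1 else -1)"
    if w: "wlk (adj A) L h" "h 0 = 0" "h L = v" for L h v
  proof (cases "even (wcn (fA A) L h)")
    case True
    then have "Wv v" unfolding Wv_def using w by blast
    then show ?thesis using True unfolding s_def by simp
  next
    case False
    have "\<not> Wv v"
    proof
      assume "Wv v"
      then obtain L' h' where h': "h' 0 = 0" "h' L' = v" "wlk (adj A) L' h'" "even (wcn (fA A) L' h')"
        unfolding Wv_def by blast
      have "even (wcn (fA A) L h + wcn (fA A) L' h')"
        by (rule walk_parity[OF CW symR symf w(1) h'(3)]) (use w h' in auto)
      with h'(4) False show False by simp
    qed
    then show ?thesis using False unfolding s_def by simp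
  qed
  have s2: "s v * s v = 1" for v unfolding s_def by simp
  have sadj: "s u * s v = (if fA A u v = 1 then -1 else 1)" if a: "adj A u v" for u v
  proof -
    have u: "u < n" using a unfolding adj_def dimA by simp
    then have "(0, u) \<in> {(x,y). adj A x y}\<^sup>*" using indec unfolding indecomposable_def dimA by auto
    from walk_exists[OF this] obtain L h where h: "h 0 = 0" "h L = u" "wlk (adj A) L h" by blast
    have a': "adj A (h L) v" using a h by simp
    note e = walk_ext(1)[OF h(3) a'] walk_ext(2)[OF h(3) a', where f="fA A"]
    have su: "s u = (if even (wcn (fA A) L h) then 1 else -1)" by (rule sval[OF h(3) h(1,2)])
    have sv: "s v = (if even (wcn (fA A) L h + fA A u v) then 1 else -1)"
      using sval[OF e(1), of v] h e(2) by simp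
    have "fA A u v = 0 \<or> fA A u v = 1" unfolding fA_def by simp
    then show ?thesis using su sv by auto
  qed
  define D :: "real mat" where "D = mat n n (\<lambda>(i,j). if i = j then s i else 0)"
  have Dc: "D \<in> carrier_mat n n" unfolding D_def by simp
  have DD: "D * D = 1\<^sub>m n" unfolding D_def by (rule diag_sq) (rule s2)
  have AC: "A = D * C * D"
  proof (rule eq_matI)
    fix i j assume "i < dim_row (D * C * D)" "j < dim_col (D * C * D)"
    then have ij: "i < n" "j < n" unfolding D_def by auto
    have r: "(D * C * D) $$ (i,j) = s i * C $$ (i,j) * s j"
      unfolding D_def by (rule diag_conj_entry) (use ij in \<open>simp_all add: C_def\<close>)
    have eb: "(p i j = 0 \<or> q i j = 0) \<and> \<bar>q i j\<bar> \<le> 1" if "i \<noteq> j"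
      by (rule entry_bounds[OF sym' eig' eig_conj diag_int ij that])
    show "A $$ (i,j) = (D * C * D) $$ (i,j)"
      unfolding r
    proof (cases "i = j")
      case True
      then show "A $$ (i,j) = s i * C $$ (i,j) * s j"
        using ent[OF ij] entC[OF ij] diag_int ij s2[of i] by simp
    next
      case ne: False
      show "A $$ (i,j) = s i * C $$ (i,j) * s j"
      proof (cases "adj A i j")
        case a: True
        have ss: "s i * C $$ (i,j) * s j = (s i * s j) * C $$ (i,j)" by simp
        show ?thesis
        proof (cases "fA A i j = 1")
          case True
          then have "\<bar>A $$ (i,j)\<bar> = sqrt 2" unfolding fA_def by (simp split: if_splits)
          then have "q i j \<noteq> 0" using ent[OF ij] abs_int_ne_sqrt2[of "p i j"] by auto
          then have "p i j = 0" using eb[OF ne] by auto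
          then show ?thesis unfolding ss sadj[OF a] using True ent[OF ij] entC[OF ij] by simp
        next
          case False
          then have nA: "\<bar>A $$ (i,j)\<bar> \<noteq> sqrt 2" using a unfolding fA_def by (auto split: if_splits)
          have "q i j = 0"
          proof (rule ccontr)
            assume "q i j \<noteq> 0"
            then have "p i j = 0" "\<bar>q i j\<bar> = 1" using eb[OF ne] by auto
            then have "\<bar>A $$ (i,j)\<bar> = sqrt 2" using ent[OF ij] by (simp add: abs_mult)
            with nA show False ..
          qed
          then show ?thesis unfolding ss sadj[OF a] using False ent[OF ij] entC[OF ij] by simp
        qed
      next
        case False
        then have "A $$ (i,j) = 0" using ne ij unfolding adj_def dimA by auto
        then have "p i j = 0 \<and> q i j = 0" using ent[OF ij] sqrt2_lin_indep by auto
        then show ?thesis using ent[OF ij] entC[OF ij] by simp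
      qed
    qed
  qed (auto simp: A_def D_def)
  have "similar_mat A C"
    unfolding similar_mat_def similar_mat_wit_def Let_def
    by (rule exI[of _ D], rule exI[of _ D]) (use Dc DD AC in \<open>auto simp: A_def C_def\<close>)
  then have cpAC: "char_poly A = char_poly C" by (rule char_poly_similar)
  define M :: "int poly mat" where "M = mat n n (\<lambda>(i,j). [:p i j, q i j:])"
  define h where "h r c = poly (map_poly real_of_int c) r" for r and c :: "int poly"
  have hom: "comm_ring_hom (h r)" for r unfolding h_def by (rule eval_hom)
  have Mc: "M \<in> carrier_mat n n" unfolding M_def by simp
  have MA: "map_mat (h (sqrt 2)) M = A"
    by (rule eq_matI) (auto simp: M_def h_def A_def zA_ent mult.commute of_int_hom.map_poly_pCons_hom)
  have MC: "map_mat (h (- sqrt 2)) M = C"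
    by (rule eq_matI) (auto simp: M_def h_def C_def zC_ent mult.commute of_int_hom.map_poly_pCons_hom)
  have cA: "char_poly A = map_poly (h (sqrt 2)) (char_poly M)"
    unfolding MA[symmetric] by (rule comm_ring_hom.char_poly_hom[OF hom Mc])
  have cC: "char_poly C = map_poly (h (- sqrt 2)) (char_poly M)"
    unfolding MC[symmetric] by (rule comm_ring_hom.char_poly_hom[OF hom Mc])
  have h0: "h r 0 = 0" for r unfolding h_def by simp
  have part2: "\<forall>i. poly.coeff (char_poly A) i \<in> \<int>"
  proof
    fix i
    obtain a b :: int where ab: "h (sqrt 2) (poly.coeff (char_poly M) i) = of_int a + sqrt 2 * of_int b"
      "h (- sqrt 2) (poly.coeff (char_poly M) i) = of_int a - sqrt 2 * of_int b"
      using zsq_poly[of "poly.coeff (char_poly M) i"] unfolding h_def by blast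
    have eA: "poly.coeff (char_poly A) i = of_int a + sqrt 2 * of_int b"
      unfolding cA by (simp add: coeff_map_poly h0 ab(1))
    have eC: "poly.coeff (char_poly A) i = of_int a - sqrt 2 * of_int b"
      unfolding cpAC cC by (simp add: coeff_map_poly h0 ab(2))
    from eA eC have "sqrt 2 * of_int b = 0" by simp
    then have "b = 0" by simp
    then show "poly.coeff (char_poly A) i \<in> \<int>" using eA by simp
  qed
  from part1 part2 show ?thesis by blast
qed

end
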